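(* The $\mathbb{Q}$-linear map $\phi_{\mathrm{inv}}:\mathrm{FQSym}\to\mathbb{Q}(\mathbf{x})\#\mathbb{N}$, $\mathcal{F}_w\mapsto \frac{\mathrm{wt}(w)}{[n]!}u^n$ for $w\in\mathfrak{S}_n$, restricts to an algebra homomorphism $\mathrm{PBT}\to\mathbb{Q}(\mathbf{x})\#\mathbb{N}$.
   Context: Let $\mathbb{Q}(\mathbf{x})=\mathbb{Q}(x_1,x_2,\ldots)$ with field endomorphism $F$, $F(x_i)=x_{i+1}$. Define $[n]:=x_1+\cdots+x_n$, $[0]!:=1$, $[n]!:=[n]\cdot F([n-1]!)$. For a $k$-element set $S=\{i_1>\cdots>i_k\}$ of positive integers, $\mathrm{wt}(S):=\frac{\prod_{j=1}^k F^{i_j-1}[j]}{[k]!}$ ($\mathrm{wt}(\emptyset)=1$). For a permutation $w=(w_1,\ldots,w_n)$ in one-line notation, $\mathrm{wt}(w)$ is defined recursively: the empty permutation has weight $1$; otherwise let $k:=w_1-1$, $S(w):=\{i:w_i\le k\}$, $a$ the permutation of $\{1,\ldots,k\}$ listing the values $w_i\le k$ in order of increasing $i$, $\hat b$ the permutation of $\{1,\ldots,n-k-1\}$ listing the values $w_i-k-1$ for $w_i>k+1$ in order of increasing $i$; then $\mathrm{wt}(w):=\mathrm{wt}(S(w))\,\mathrm{wt}(a)\,F^{k+1}(\mathrm{wt}(\hat b))$. $\mathrm{FQSym}$ (Malvenuto–Reutenauer algebra) has $\mathbb{Q}$-basis $\{\mathcal{F}_w: w\in\bigsqcup_{n\ge0}\mathfrak{S}_n\}$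 with product $\mathcal{F}_a\mathcal{F}_b=\sum_w\mathcal{F}_w$ for $a\in\mathfrak{S}_k,b\in\mathfrak{S}_\ell$, summing over all shuffles $w$ of the words $(a_1,\ldots,a_k)$ and $(b_1+k,\ldots,b_\ell+k)$. For a poset $P$ on $\{1,\ldots,n\}$, $\mathcal{F}_P:=\sum_{w\in\mathcal{L}(P)}\mathcal{F}_w$, where $\mathcal{L}(P)$ is the set of permutations $w$ such that $i<_Pj$ implies $i$ appears before $j$ in $w_1\cdots w_n$. A recursively labelled forest is a partial order on $\{1,\ldots,n\}$ in which every element covers at most one other element and each subtree $P_{\geq i}=\{j:j\geq_P i\}$ is an interval of consecutive integers. $\mathrm{PBT}$ (Loday–Ronco algebra) is the subalgebra of $\mathrm{FQSym}$ spanned by all $\mathcal{F}_P$ for $P$ a recursively labelled forest. The skew semigroup algebra $\mathbb{Q}(\mathbf{x})\#\mathbb{N}$ is the free $\mathbb{Q}(\mathbf{x})$-module with basis $\{1,u,u^2,\ldots\}$ and multiplication $f u^k\cdot g u^\ell=(f\,F^k(g))u^{k+\ell}$. *)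

theory Defs
  imports Complex_Main "HOL-Library.Poly_Mapping" "HOL-Computational_Algebra.Fraction_Field"
begin

text \<open>Polynomials over Q in countably many variables: a monomial is an exponent
vector (nat =>0 nat), where index j stands for the variable x_(j+1).
Q(x) is the fraction field of this integral domain.\<close>

type_synonym mpoly = "(nat \<Rightarrow>\<^sub>0 nat) \<Rightarrow>\<^sub>0 rat"
type_synonym ratfun = "mpoly fract"

definition var :: "nat \<Rightarrow> ratfun" where
  "var i = Fract (Poly_Mapping.single (Poly_Mapping.single (i - 1) 1) 1) 1"

definition rconst :: "rat \<Rightarrow> ratfun" where
  "rconst c = Fract (Poly_Mapping.single 0 c) 1"

definition mshift :: "(nat \<Rightarrow>\<^sub>0 nat) \<Rightarrow> (nat \<Rightarrow>\<^sub>0 nat)" where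
  "mshift m = Abs_poly_mapping (\<lambda>k. if k = 0 then 0 else Poly_Mapping.lookup m (k - 1))"

definition pshift :: "mpoly \<Rightarrow> mpoly" where
  "pshift p = (\<Sum>m\<in>Poly_Mapping.keys p. Poly_Mapping.single (mshift m) (Poly_Mapping.lookup p m))"

definition Fend :: "ratfun \<Rightarrow> ratfun" where
  "Fend q = (case (SOME (a, b). b \<noteq> 0 \<and> q = Fract a b) of (a, b) \<Rightarrow> Fract (pshift a) (pshift b))"

definition brk :: "nat \<Rightarrow> ratfun" where
  "brk n = (\<Sum>i = 1..n. var i)"

fun bfact :: "nat \<Rightarrow> ratfun" where
  "bfact 0 = 1"
| "bfact (Suc n) = brk (Suc n) * Fend (bfact n)"

definition wt_set :: "nat set \<Rightarrow> ratfun" where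
  "wt_set S = (let L = rev (sorted_list_of_set S); k = length L in
     (\<Prod>j<k. (Fend ^^ (L ! j - 1)) (brk (j + 1))) / bfact k)"

text \<open>Since w_1 = k+1 is neither <= k nor > k+1, the lists a and bh may be
computed from the tail of w; this makes the recursion structurally decreasing.\<close>
function wt :: "nat list \<Rightarrow> ratfun" where
  "wt [] = 1"
| "wt (v # vs) =
     (let w = v # vs; k = v - 1;
          S = {i. 1 \<le> i \<and> i \<le> length w \<and> w ! (i - 1) \<le> k};
          a = filter (\<lambda>x. x \<le> k) vs;
          bh = map (\<lambda>x. x - k - 1) (filter (\<lambda>x. x > k + 1) vs)
      in wt_set S * wt a * (Fend ^^ (k + 1)) (wt bh))"
  by pat_completeness auto
termination
  by (relation "measure length") (auto simp: le_imp_less_Suc)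

definition is_perm :: "nat \<Rightarrow> nat list \<Rightarrow> bool" where
  "is_perm n w \<longleftrightarrow> distinct w \<and> set w = {1..n}"

type_synonym fqsym = "nat list \<Rightarrow>\<^sub>0 rat"

definition FQSym :: "fqsym set" where
  "FQSym = {f. \<forall>w\<in>Poly_Mapping.keys f. is_perm (length w) w}"

definition fqF :: "nat list \<Rightarrow> fqsym" where
  "fqF w = Poly_Mapping.single w 1"

definition fq_mult :: "fqsym \<Rightarrow> fqsym \<Rightarrow> fqsym" where
  "fq_mult f g = (\<Sum>a\<in>Poly_Mapping.keys f. \<Sum>b\<in>Poly_Mapping.keys g.
      \<Sum>w\<in>shuffles a (map (\<lambda>x. x + length a) b). Poly_Mapping.single w (Poly_Mapping.lookup f a * Poly_Mapping.lookup g b))"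

definition fq_one :: fqsym where
  "fq_one = fqF []"

definition fq_scale :: "rat \<Rightarrow> fqsym \<Rightarrow> fqsym" where
  "fq_scale c f = Poly_Mapping.map (\<lambda>x. c * x) f"

definition linext :: "nat \<Rightarrow> (nat \<times> nat) set \<Rightarrow> nat list set" where
  "linext n P = {w. is_perm n w \<and>
     (\<forall>p q. p < length w \<and> q < length w \<and> (w ! p, w ! q) \<in> P \<and> w ! p \<noteq> w ! q \<longrightarrow> p < q)}"

definition fqF_poset :: "nat \<Rightarrow> (nat \<times> nat) set \<Rightarrow> fqsym" where
  "fqF_poset n P = (\<Sum>w\<in>linext n P. fqF w)"

definition covers :: "(nat \<times> nat) set \<Rightarrow> nat \<Rightarrow> nat \<Rightarrow> bool" where
  "covers P j i \<longleftrightarrow> (i, j) \<in> P \<and> i \<noteq> j \<and>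
     \<not> (\<exists>k. k \<noteq> i \<and> k \<noteq> j \<and> (i, k) \<in> P \<and> (k, j) \<in> P)"

definition rec_labelled_forest :: "nat \<Rightarrow> (nat \<times> nat) set \<Rightarrow> bool" where
  "rec_labelled_forest n P \<longleftrightarrow> partial_order_on {1..n} P \<and>
     (\<forall>j\<in>{1..n}. \<forall>i1 i2. covers P j i1 \<and> covers P j i2 \<longrightarrow> i1 = i2) \<and>
     (\<forall>i\<in>{1..n}. \<exists>a b. {j. (i, j) \<in> P} = {a..b})"

inductive_set PBT :: "fqsym set" where
  PBT_zero: "0 \<in> PBT"
| PBT_gen: "rec_labelled_forest n P \<Longrightarrow> fqF_poset n P \<in> PBT"
| PBT_add: "f \<in> PBT \<Longrightarrow> g \<in> PBT \<Longrightarrow> f + g \<in> PBT"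
| PBT_scale: "f \<in> PBT \<Longrightarrow> fq_scale c f \<in> PBT"

type_synonym skew = "nat \<Rightarrow>\<^sub>0 ratfun"

definition skew_mult :: "skew \<Rightarrow> skew \<Rightarrow> skew" where
  "skew_mult A B = (\<Sum>k\<in>Poly_Mapping.keys A. \<Sum>l\<in>Poly_Mapping.keys B.
      Poly_Mapping.single (k + l) (Poly_Mapping.lookup A k * (Fend ^^ k) (Poly_Mapping.lookup B l)))"

definition skew_one :: skew where
  "skew_one = Poly_Mapping.single 0 1"

definition phi_inv :: "fqsym \<Rightarrow> skew" where
  "phi_inv f = (\<Sum>w\<in>Poly_Mapping.keys f.
      Poly_Mapping.single (length w) (rconst (Poly_Mapping.lookup f w) * (wt w / bfact (length w))))"

end

theory Submission
  imports Defs
begin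


lemma lookup_mshift: "Poly_Mapping.lookup (mshift m) k = (if k = 0 then 0 else Poly_Mapping.lookup m (k - 1))"
proof -
  have "{k. (if k = 0 then 0 else Poly_Mapping.lookup m (k - 1)) \<noteq> 0} \<subseteq> Suc ` Poly_Mapping.keys m"
  proof
    fix k assume "k \<in> {k. (if k = 0 then 0 else Poly_Mapping.lookup m (k - 1)) \<noteq> 0}"
    then have "k \<noteq> 0" "Poly_Mapping.lookup m (k - 1) \<noteq> 0" by (auto split: if_splits)
    then show "k \<in> Suc ` Poly_Mapping.keys m" by (intro image_eqI[of _ _ "k - 1"]) (auto simp: in_keys_iff)
  qed
  then have "finite {k. (if k = 0 then 0 else Poly_Mapping.lookup m (k - 1)) \<noteq> 0}"
    by (rule finite_subset) simp
  then show ?thesis unfolding mshift_def by simp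
qed
lemma mshift_add: "mshift (m + n) = mshift m + mshift n"
  by (rule poly_mapping_eqI) (simp add: lookup_mshift lookup_add)

lemma mshift_zero: "mshift 0 = 0"
  by (rule poly_mapping_eqI) (simp add: lookup_mshift)

lemma inj_mshift: "inj mshift"
proof (rule injI)
  fix m n assume "mshift m = mshift n"
  then have "Poly_Mapping.lookup (mshift m) (Suc k) = Poly_Mapping.lookup (mshift n) (Suc k)" for k by simp
  then show "m = n" by (intro poly_mapping_eqI) (simp add: lookup_mshift)
qed

lemma mshift_single: "mshift (Poly_Mapping.single j c) = Poly_Mapping.single (Suc j) c"
  by (rule poly_mapping_eqI) (auto simp: lookup_mshift lookup_single when_def)

lemma pshift_gen:
  assumes "finite A" "Poly_Mapping.keys p \<subseteq> A"
  shows "pshift p = (\<Sum>m\<in>A. Poly_Mapping.single (mshift m) (Poly_Mapping.lookup p m))"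
  unfolding pshift_def
  by (rule sum.mono_neutral_left) (use assms in \<open>auto simp: in_keys_iff\<close>)

lemma pshift_add: "pshift (p + q) = pshift p + pshift q"
proof -
  let ?A = "Poly_Mapping.keys p \<union> Poly_Mapping.keys q"
  have k: "Poly_Mapping.keys (p + q) \<subseteq> ?A" by (rule keys_add)
  show ?thesis
    by (simp add: pshift_gen[OF _ k] pshift_gen[of ?A p] pshift_gen[of ?A q]
        lookup_add single_add sum.distrib)
qed

lemma pshift_zero: "pshift 0 = 0"
  by (simp add: pshift_def)

lemma pshift_single: "pshift (Poly_Mapping.single m c) = Poly_Mapping.single (mshift m) c"
  by (simp add: pshift_gen[of "{m}"])

lemma pshift_sum: "pshift (sum f A) = (\<Sum>x\<in>A. pshift (f x))"
  by (induction A rule: infinite_finite_induct) (simp_all add: pshift_zero pshift_add)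

lemma poly_sum_single: "(p :: mpoly) = (\<Sum>m\<in>Poly_Mapping.keys p. Poly_Mapping.single m (Poly_Mapping.lookup p m))"
proof (rule poly_mapping_eqI)
  fix k
  have "(\<Sum>m\<in>Poly_Mapping.keys p. Poly_Mapping.lookup (Poly_Mapping.single m (Poly_Mapping.lookup p m)) k)
     = (\<Sum>m\<in>Poly_Mapping.keys p. if m = k then Poly_Mapping.lookup p m else 0)"
    by (intro sum.cong) (auto simp: lookup_single when_def)
  also have "\<dots> = Poly_Mapping.lookup p k" by (auto simp: in_keys_iff)
  finally show "Poly_Mapping.lookup p k = Poly_Mapping.lookup (\<Sum>m\<in>Poly_Mapping.keys p. Poly_Mapping.single m (Poly_Mapping.lookup p m)) k"
    by (simp add: lookup_sum)
qed
lemma pshift_mult: "pshift (p * q) = pshift p * pshift q"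
proof -
  let ?s = "\<lambda>p m. Poly_Mapping.single m (Poly_Mapping.lookup p m)"
  have "p * q = (\<Sum>m\<in>Poly_Mapping.keys p. ?s p m) * (\<Sum>n\<in>Poly_Mapping.keys q. ?s q n)"
    using poly_sum_single[of p] poly_sum_single[of q] by simp
  also have "\<dots> = (\<Sum>m\<in>Poly_Mapping.keys p. \<Sum>n\<in>Poly_Mapping.keys q.
      Poly_Mapping.single (m + n) (Poly_Mapping.lookup p m * Poly_Mapping.lookup q n))"
    by (simp add: sum_product mult_single)
  finally have 1: "pshift (p * q) = (\<Sum>m\<in>Poly_Mapping.keys p. \<Sum>n\<in>Poly_Mapping.keys q.
      Poly_Mapping.single (mshift m + mshift n) (Poly_Mapping.lookup p m * Poly_Mapping.lookup q n))"
    by (simp add: pshift_sum pshift_single mshift_add)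
  have "pshift p * pshift q = (\<Sum>m\<in>Poly_Mapping.keys p. Poly_Mapping.single (mshift m) (Poly_Mapping.lookup p m)) *
       (\<Sum>n\<in>Poly_Mapping.keys q. Poly_Mapping.single (mshift n) (Poly_Mapping.lookup q n))"
    by (simp add: pshift_def)
  also have "\<dots> = (\<Sum>m\<in>Poly_Mapping.keys p. \<Sum>n\<in>Poly_Mapping.keys q.
      Poly_Mapping.single (mshift m + mshift n) (Poly_Mapping.lookup p m * Poly_Mapping.lookup q n))"
    by (simp add: sum_product mult_single)
  finally show ?thesis using 1 by simp
qed

lemma lookup_pshift_mshift: "Poly_Mapping.lookup (pshift p) (mshift m) = Poly_Mapping.lookup p m"
proof -
  have "Poly_Mapping.lookup (pshift p) (mshift m) =
     (\<Sum>m'\<in>Poly_Mapping.keys p. (Poly_Mapping.lookup p m' when mshift m' = mshift m))"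
    by (simp add: pshift_def lookup_sum lookup_single)
  also have "\<dots> = (\<Sum>m'\<in>Poly_Mapping.keys p. (if m' = m then Poly_Mapping.lookup p m' else 0))"
    using inj_mshift by (intro sum.cong) (auto simp: when_def inj_eq)
  also have "\<dots> = Poly_Mapping.lookup p m"
    by (auto simp: in_keys_iff)
  finally show ?thesis .
qed

lemma pshift_eq_zero: 
  assumes "pshift p = 0" shows "p = 0"
proof (rule poly_mapping_eqI)
  fix k
  have "Poly_Mapping.lookup p k = Poly_Mapping.lookup (pshift p) (mshift k)" by (simp add: lookup_pshift_mshift)
  then show "Poly_Mapping.lookup p k = Poly_Mapping.lookup 0 k" using assms by simp
qed

lemma pshift_nz: "b \<noteq> 0 \<Longrightarrow> pshift b \<noteq> 0"
  using pshift_eq_zero by blast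

lemma pshift_one: "pshift 1 = 1"
  by (metis pshift_single mshift_zero single_one)

lemma Fend_Fract:
  assumes "b \<noteq> 0"
  shows "Fend (Fract a b) = Fract (pshift a) (pshift b)"
proof -
  let ?P = "\<lambda>(x, y). y \<noteq> 0 \<and> Fract a b = Fract x y"
  have "?P (a, b)" using assms by simp
  then have "?P (SOME z. ?P z)" by (rule someI)
  moreover obtain a' b' where ab: "(SOME z. ?P z) = (a', b')" by fastforce
  ultimately have b': "b' \<noteq> 0" and e: "Fract a b = Fract a' b'" by auto
  have "a * b' = a' * b" using e eq_fract(1)[OF assms b'] by simp
  then have "pshift a * pshift b' = pshift a' * pshift b" by (metis pshift_mult)
  moreover have "pshift b \<noteq> 0" "pshift b' \<noteq> 0" using assms b' pshift_eq_zero by auto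
  ultimately have "Fract (pshift a') (pshift b') = Fract (pshift a) (pshift b)"
    by (simp add: eq_fract(1))
  then show ?thesis unfolding Fend_def ab by simp
qed

lemma Fend_add: "Fend (x + y) = Fend x + Fend y"
  by (induction x, induction y) (simp add: Fend_Fract pshift_add pshift_mult pshift_nz)

lemma Fend_mult: "Fend (x * y) = Fend x * Fend y"
  by (induction x, induction y) (simp add: Fend_Fract pshift_mult)

lemma Fend_zero: "Fend 0 = 0"
  by (simp add: Zero_fract_def Fend_Fract pshift_zero pshift_one)

lemma Fend_one: "Fend 1 = 1"
  by (simp add: One_fract_def Fend_Fract pshift_one)

lemma Fend_eq_zero: "Fend x = 0 \<Longrightarrow> x = 0"
proof (induction x)
  case (Fract a b)
  then have "Fract (pshift a) (pshift b) = 0" by (simp add: Fend_Fract)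
  moreover have "pshift b \<noteq> 0" using Fract pshift_eq_zero by auto
  ultimately have "pshift a = 0" by (simp add: Zero_fract_def eq_fract)
  then have "a = 0" by (rule pshift_eq_zero)
  then show ?case by (simp add: Zero_fract_def eq_fract(3))
qed

lemma Fend_inverse: "Fend (inverse x) = inverse (Fend x)"
proof (cases "x = 0")
  case True then show ?thesis by (simp add: Fend_zero)
next
  case False
  have "Fend (inverse x) * Fend x = 1" using False by (simp flip: Fend_mult add: Fend_one)
  then show ?thesis by (metis inverse_unique mult.commute)
qed

lemma Fend_divide: "Fend (x / y) = Fend x / Fend y"
  by (simp add: divide_inverse Fend_mult Fend_inverse)

lemma Fend_sum: "Fend (sum f A) = (\<Sum>x\<in>A. Fend (f x))"
  by (induction A rule: infinite_finite_induct) (simp_all add: Fend_zero Fend_add)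

lemma Fend_prod: "Fend (prod f A) = (\<Prod>x\<in>A. Fend (f x))"
  by (induction A rule: infinite_finite_induct) (simp_all add: Fend_one Fend_mult)


abbreviation Fk :: "nat \<Rightarrow> ratfun \<Rightarrow> ratfun" where "Fk k \<equiv> Fend ^^ k"

lemma Fk_add: "Fk k (x + y) = Fk k x + Fk k y"
  by (induction k) (simp_all add: Fend_add)
lemma Fk_mult: "Fk k (x * y) = Fk k x * Fk k y"
  by (induction k) (simp_all add: Fend_mult)
lemma Fk_zero: "Fk k 0 = 0"
  by (induction k) (simp_all add: Fend_zero)
lemma Fk_one: "Fk k 1 = 1"
  by (induction k) (simp_all add: Fend_one)
lemma Fk_inverse: "Fk k (inverse x) = inverse (Fk k x)"
  by (induction k) (simp_all add: Fend_inverse)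
lemma Fk_divide: "Fk k (x / y) = Fk k x / Fk k y"
  by (induction k) (simp_all add: Fend_divide)
lemma Fk_sum: "Fk k (sum f A) = (\<Sum>x\<in>A. Fk k (f x))"
  by (induction k) (simp_all add: Fend_sum)
lemma Fk_prod: "Fk k (prod f A) = (\<Prod>x\<in>A. Fk k (f x))"
  by (induction k) (simp_all add: Fend_prod)
lemma Fk_eq_zero: "Fk k x = 0 \<Longrightarrow> x = 0"
  by (induction k) (auto dest: Fend_eq_zero)
lemma Fk_nz: "x \<noteq> 0 \<Longrightarrow> Fk k x \<noteq> 0"
  using Fk_eq_zero by blast
lemma Fk_Suc: "Fk (Suc k) x = Fend (Fk k x)"
  by simp
lemma Fk_Suc': "Fk (Suc k) x = Fk k (Fend x)"
  by (simp add: funpow_Suc_right del: funpow.simps)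
lemma Fk_plus: "Fk (a + b) x = Fk a (Fk b x)"
  by (simp add: funpow_add)

lemma rconst_zero: "rconst 0 = 0"
  by (simp add: rconst_def Zero_fract_def)
lemma rconst_one: "rconst 1 = 1"
  by (simp add: rconst_def One_fract_def)
lemma rconst_add: "rconst (a + b) = rconst a + rconst b"
  by (simp add: rconst_def single_add)
lemma rconst_mult: "rconst (a * b) = rconst a * rconst b"
  by (simp add: rconst_def mult_single)
lemma Fend_rconst: "Fend (rconst c) = rconst c"
  by (simp add: rconst_def Fend_Fract pshift_single pshift_one mshift_zero)
lemma Fk_rconst: "Fk k (rconst c) = rconst c"
  by (induction k) (simp_all add: Fend_rconst)

lemma Fend_var: "1 \<le> i \<Longrightarrow> Fend (var i) = var (Suc i)"
  by (simp add: var_def Fend_Fract pshift_single pshift_one mshift_single)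

definition vs :: "nat set \<Rightarrow> ratfun" where "vs A = (\<Sum>i\<in>A. var i)"

lemma Fend_vs: "0 \<notin> A \<Longrightarrow> Fend (vs A) = vs (Suc ` A)"
proof -
  assume A: "0 \<notin> A"
  have "Fend (vs A) = (\<Sum>i\<in>A. var (Suc i))"
    unfolding vs_def Fend_sum using A by (intro sum.cong refl Fend_var) (metis One_nat_def Suc_leI neq0_conv)
  also have "\<dots> = vs (Suc ` A)" unfolding vs_def by (simp add: sum.reindex)
  finally show ?thesis .
qed

lemma Fk_vs: "0 \<notin> A \<Longrightarrow> Fk k (vs A) = vs ((\<lambda>i. i + k) ` A)"
proof (induction k)
  case 0 then show ?case by simp
next
  case (Suc k)
  have "0 \<notin> (\<lambda>i. i + k) ` A" using Suc by auto
  then show ?case using Suc by (simp add: Fend_vs image_image)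
qed

lemma Fract_sum1: "(\<Sum>i\<in>A. Fract (f i) 1) = Fract (sum f A) (1::mpoly)"
  by (induction A rule: infinite_finite_induct) (simp_all add: Zero_fract_def)

lemma vs_nz:
  assumes "finite A" "A \<noteq> {}" "0 \<notin> A"
  shows "vs A \<noteq> 0"
proof
  assume z: "vs A = 0"
  let ?p = "\<Sum>i\<in>A. Poly_Mapping.single (Poly_Mapping.single (i - 1) (1::nat)) (1::rat)"
  have "vs A = Fract ?p 1" unfolding vs_def var_def by (rule Fract_sum1)
  then have "?p = 0" using z by (simp add: Zero_fract_def eq_fract)
  obtain i0 where i0: "i0 \<in> A" using assms by auto
  have "Poly_Mapping.lookup ?p (Poly_Mapping.single (i0 - 1) 1) =
      (\<Sum>i\<in>A. if i = i0 then 1 else 0)"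
  proof (unfold lookup_sum, intro sum.cong refl)
    fix i assume "i \<in> A"
    then have "i \<noteq> 0" "i0 \<noteq> 0" using assms i0 by auto
    have "Poly_Mapping.single (i - 1) (1::nat) = Poly_Mapping.single (i0 - 1) 1 \<longleftrightarrow> i - 1 = i0 - 1"
      by (metis lookup_single_eq lookup_single_not_eq zero_neq_one)
    then have "Poly_Mapping.single (i - 1) (1::nat) = Poly_Mapping.single (i0 - 1) 1 \<longleftrightarrow> i = i0"
      using \<open>i \<noteq> 0\<close> \<open>i0 \<noteq> 0\<close> by arith
    then show "Poly_Mapping.lookup (Poly_Mapping.single (Poly_Mapping.single (i - 1) (1::nat)) (1::rat)) (Poly_Mapping.single (i0 - 1) 1) = (if i = i0 then 1 else 0)"
      by (simp add: lookup_single when_def)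
  qed
  also have "\<dots> = 1" using i0 assms by simp
  finally show False using \<open>?p = 0\<close> by simp
qed

lemma brk_vs: "brk n = vs {1..n}"
  by (simp add: brk_def vs_def)

lemma brk_nz: "n \<ge> 1 \<Longrightarrow> brk n \<noteq> 0"
  unfolding brk_vs by (rule vs_nz) auto

lemma Fk_brk: "Fk k (brk n) = vs {k+1..k+n}"
proof -
  have "(\<lambda>i. i + k) ` {1..n} = {k+1..k+n}"
    by (auto simp: image_iff)
  then show ?thesis by (simp add: brk_vs Fk_vs add.commute)
qed

lemma brk_add: "Fk 1 (brk c) + Fk (c + 1) (brk d) = Fk 1 (brk (c + d))"
proof -
  have "{2..c+1} \<union> {c+2..c+d+1} = {2..c+d+1}" "{2..c+1} \<inter> {c+2..c+d+1} = {}" by auto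
  then have "vs {2..c+1} + vs {c+2..c+d+1} = vs {2..c+d+1}"
    unfolding vs_def by (metis finite_atLeastAtMost sum.union_disjoint)
  then show ?thesis unfolding Fk_brk by (simp add: add.commute numeral_2_eq_2)
qed

lemma bfact_nz: "bfact n \<noteq> 0"
  by (induction n) (use Fend_eq_zero brk_nz in auto)

lemma bfact_Suc': "bfact (Suc n) = brk (Suc n) * Fk 1 (bfact n)"
  by simp


definition num :: "nat set \<Rightarrow> ratfun" where
  "num S = (let L = rev (sorted_list_of_set S); k = length L in
     (\<Prod>j<k. (Fend ^^ (L ! j - 1)) (brk (j + 1))))"

lemma wt_set_num: "wt_set S = num S / bfact (card S)"
  by (simp add: wt_set_def num_def Let_def length_sorted_list_of_set)

lemma num_empty: "num {} = 1"
  by (simp add: num_def)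

lemma sorted_list_Suc_image:
  assumes "finite S"
  shows "sorted_list_of_set (Suc ` S) = map Suc (sorted_list_of_set S)"
proof -
  have "sorted_wrt (<) (map Suc (sorted_list_of_set S))"
    using strict_sorted_list_of_set[of S] by (simp add: sorted_wrt_map)
  moreover have "set (map Suc (sorted_list_of_set S)) = Suc ` S" using assms by simp
  moreover have "length (map Suc (sorted_list_of_set S)) = card (Suc ` S)"
    using assms by (simp add: card_image length_sorted_list_of_set)
  ultimately show ?thesis using sorted_list_of_set_unique[of "Suc ` S"] assms by blast
qed

lemma sorted_list_insert_min:
  assumes "finite T" "\<forall>i\<in>T. m < i"
  shows "sorted_list_of_set (insert m T) = m # sorted_list_of_set T"
proof -
  have "sorted_wrt (<) (m # sorted_list_of_set T)"
    using strict_sorted_list_of_set[of T] assms by simp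
  moreover have "set (m # sorted_list_of_set T) = insert m T" using assms by simp
  moreover have "m \<notin> T" using assms by auto
  then have "length (m # sorted_list_of_set T) = card (insert m T)"
    using assms by (simp add: length_sorted_list_of_set)
  ultimately show ?thesis using sorted_list_of_set_unique[of "insert m T"] assms by blast
qed

lemma num_Suc_image:
  assumes "finite S" "0 \<notin> S"
  shows "num (Suc ` S) = Fend (num S)"
proof -
  let ?L = "rev (sorted_list_of_set S)"
  have L: "rev (sorted_list_of_set (Suc ` S)) = map Suc ?L"
    using assms by (simp add: sorted_list_Suc_image rev_map)
  have "num (Suc ` S) = (\<Prod>j<length ?L. Fk (?L ! j) (brk (j + 1)))"
    unfolding num_def Let_def L by simp
  also have "\<dots> = (\<Prod>j<length ?L. Fend (Fk (?L ! j - 1) (brk (j + 1))))"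
  proof (intro prod.cong refl)
    fix j assume "j \<in> {..<length ?L}"
    then have "?L ! j \<in> S" using assms by (metis lessThan_iff nth_mem set_rev set_sorted_list_of_set)
    then have "?L ! j = Suc (?L ! j - 1)" using assms by (metis Suc_pred' bot_nat_0.not_eq_extremum)
    then show "Fk (?L ! j) (brk (j + 1)) = Fend (Fk (?L ! j - 1) (brk (j + 1)))"
      by (metis Fk_Suc)
  qed
  also have "\<dots> = Fend (num S)" by (simp add: num_def Fend_prod)
  finally show ?thesis .
qed

lemma num_insert_min:
  assumes "finite T" "\<forall>i\<in>T. m < i"
  shows "num (insert m T) = num T * Fk (m - 1) (brk (card T + 1))"
proof -
  let ?L = "rev (sorted_list_of_set T)"
  have L: "rev (sorted_list_of_set (insert m T)) = ?L @ [m]"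
    unfolding sorted_list_insert_min[OF assms] by simp
  have len: "length ?L = card T" by (simp add: length_sorted_list_of_set)
  have "num (insert m T) = (\<Prod>j<Suc (length ?L). Fk ((?L @ [m]) ! j - 1) (brk (j + 1)))"
    unfolding num_def Let_def L by simp
  also have "\<dots> = (\<Prod>j<length ?L. Fk ((?L @ [m]) ! j - 1) (brk (j + 1))) * Fk (m - 1) (brk (card T + 1))"
  proof -
    have nth: "(?L @ [m]) ! length ?L = m" by (rule nth_append_length)
    show ?thesis by (simp only: prod.lessThan_Suc nth) (simp only: len)
  qed
  also have "(\<Prod>j<length ?L. Fk ((?L @ [m]) ! j - 1) (brk (j + 1))) = num T"
    unfolding num_def Let_def by (intro prod.cong refl) (simp add: nth_append)
  finally show ?thesis .
qed

definition U :: "nat \<Rightarrow> nat list \<Rightarrow> nat set" where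
  "U k v = {i. 2 \<le> i \<and> i \<le> length v + 1 \<and> v ! (i - 2) \<le> k}"

lemma U_Nil: "U k [] = {}"
  by (auto simp: U_def)

lemma U_Cons: "U k (x # v) = (if x \<le> k then insert 2 (Suc ` U k v) else Suc ` U k v)"
proof -
  have "i \<in> U k (x # v) \<longleftrightarrow> i \<in> (if x \<le> k then insert 2 (Suc ` U k v) else Suc ` U k v)" for i
  proof (cases "i \<le> 2")
    case True
    then show ?thesis by (auto simp: U_def)
  next
    case False
    define j where "j = i - 1"
    have j: "i = Suc j" "2 \<le> j" using False by (auto simp: j_def)
    then have "(x # v) ! (i - 2) = v ! (j - 2)" by (simp add: nth_Cons' numeral_2_eq_2)
    moreover have "i \<in> Suc ` U k v \<longleftrightarrow> j \<in> U k v" using j by auto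
    ultimately show ?thesis using j False by (auto simp: U_def)
  qed
  then show ?thesis by blast
qed

lemma finite_U: "finite (U k v)"
  by (rule finite_subset[of _ "{2..length v + 1}"]) (auto simp: U_def)

lemma U_ge2: "i \<in> U k v \<Longrightarrow> 2 \<le> i"
  by (simp add: U_def)

lemma card_U: "card (U k v) = length (filter (\<lambda>x. x \<le> k) v)"
proof (induction v)
  case Nil then show ?case by (simp add: U_Nil)
next
  case (Cons x v)
  have "2 \<notin> Suc ` U k v" using U_ge2 by fastforce
  then show ?case using Cons by (simp add: U_Cons card_image finite_U)
qed

lemma U_all_big: 
  assumes "\<forall>y\<in>set v. k < y" shows "U k v = {}"
proof -
  have False if "i \<in> U k v" for i
  proof -
    have "i - 2 < length v" "v ! (i - 2) \<le> k" using that by (auto simp: U_def)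
    moreover from this(1) have "v ! (i - 2) \<in> set v" by (rule nth_mem)
    ultimately show False using assms by fastforce
  qed
  then show ?thesis by blast
qed

lemma num_U_small:
  assumes "\<forall>x\<in>set a. x \<le> k"
  shows "num (U k a) = Fend (bfact (length a))"
  using assms
proof (induction a)
  case Nil then show ?case by (simp add: U_Nil num_empty Fend_one)
next
  case (Cons x a)
  have c: "card (U k a) = length a"
    using Cons.prems by (simp add: card_U)
  have g: "\<forall>i\<in>Suc ` U k a. 2 < i" using U_ge2 by fastforce
  have z: "0 \<notin> U k a" using U_ge2 by fastforce
  have "num (U k (x # a)) = num (Suc ` U k a) * Fk 1 (brk (card (Suc ` U k a) + 1))"
    using Cons.prems by (simp add: U_Cons num_insert_min[OF _ g] finite_U)
  also have "\<dots> = Fend (num (U k a)) * Fend (brk (length a + 1))"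
    by (simp add: num_Suc_image[OF finite_U z] card_image c)
  also have "\<dots> = Fend (bfact (length (x # a)))"
    using Cons by (simp add: Fend_mult mult.commute)
  finally show ?case .
qed

lemma shuffles_Nil2: "shuffles xs [] = {xs}"
  by (cases xs) simp_all

lemma filter_small_shuffle:
  fixes k :: nat
  assumes "\<forall>x\<in>set a. x \<le> k" "\<forall>y\<in>set b. k < y" "v \<in> shuffles a b"
  shows "filter (\<lambda>x. x \<le> k) v = a"
proof -
  have "filter (\<lambda>x. x \<le> k) v \<in> filter (\<lambda>x. x \<le> k) ` shuffles a b" using assms by blast
  also have "\<dots> = shuffles (filter (\<lambda>x. x \<le> k) a) (filter (\<lambda>x. x \<le> k) b)" by (rule filter_shuffles)
  also have "filter (\<lambda>x. x \<le> k) b = []" by (rule filter_False) (use assms(2) in fastforce)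
  also have "filter (\<lambda>x. x \<le> k) a = a" using assms(1) by (simp add: filter_id_conv)
  also have "shuffles a [] = {a}" by (rule shuffles_Nil2)
  finally show ?thesis by simp
qed

lemma Fend_Fk: "Fend (Fk k x) = Fk (k + 1) x"
  by simp
lemma Fk_2: "Fk 2 x = Fend (Fend x)"
  by (simp add: numeral_2_eq_2)

lemma ring_aux:
  fixes A B X Y P Q R S T :: ratfun
  assumes "S = A * X + Y" "P = B * Q" "X * P = R" "Y * Q = R" "A + B = T"
  shows "S * P = R * T"
proof -
  have "S * P = A * (X * P) + B * (Y * Q)" using assms(1,2) by (simp add: algebra_simps)
  also have "\<dots> = R * (A + B)" using assms(3,4) by (simp add: algebra_simps)
  also have "\<dots> = R * T" using assms(5) by simp
  finally show ?thesis .
qed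

lemma sigma_identity:
  assumes "\<forall>x\<in>set a. x \<le> k" "\<forall>y\<in>set b. k < y"
  shows "(\<Sum>v\<in>shuffles a b. num (U k v)) * Fk (length a + 1) (bfact (length b))
     = Fend (bfact (length a + length b))"
  using assms
proof (induction a b rule: shuffles.induct)
  case (1 ys)
  then show ?case by (simp add: U_all_big num_empty)
next
  case (2 xs)
  then show ?case by (simp add: num_U_small Fk_one Fend_one)
next
  case (3 x xs y ys)
  let ?S1 = "\<Sum>v\<in>shuffles xs (y # ys). num (U k v)"
  let ?S2 = "\<Sum>v\<in>shuffles (x # xs) ys. num (U k v)"
  let ?c = "length xs + 1" and ?d = "length ys + 1"
  have xk: "x \<le> k" "\<not> y \<le> k" using "3.prems" by auto
  have IH1: "?S1 * Fk ?c (bfact ?d) = Fend (bfact (length xs + ?d))"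
    using "3.IH"(1) "3.prems" by simp
  have IH2: "?S2 * Fk (?c + 1) (bfact (length ys)) = Fend (bfact (?c + length ys))"
    using "3.IH"(2) "3.prems" by simp
  have disj: "(#) x ` shuffles xs (y # ys) \<inter> (#) y ` shuffles (x # xs) ys = {}"
    using xk by auto
  have s: "(\<Sum>v\<in>shuffles (x # xs) (y # ys). num (U k v)) =
      (\<Sum>v\<in>shuffles xs (y # ys). num (U k (x # v))) + (\<Sum>v\<in>shuffles (x # xs) ys. num (U k (y # v)))"
    by (simp add: sum.union_disjoint[OF _ _ disj] sum.reindex)
  have t1: "num (U k (x # v)) = Fend (brk ?c) * Fend (num (U k v))" if "v \<in> shuffles xs (y # ys)" for v
  proof -
    have c: "card (U k v) = length xs"
      using filter_small_shuffle[OF _ _ that] "3.prems" by (simp add: card_U)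
    have g: "\<forall>i\<in>Suc ` U k v. 2 < i" using U_ge2 by fastforce
    have z: "0 \<notin> U k v" using U_ge2 by fastforce
    have "num (U k (x # v)) = num (Suc ` U k v) * Fk 1 (brk (card (Suc ` U k v) + 1))"
      using xk by (simp add: U_Cons num_insert_min[OF _ g] finite_U)
    also have "\<dots> = Fend (num (U k v)) * Fend (brk ?c)"
      by (simp add: num_Suc_image[OF finite_U z] card_image c)
    finally show ?thesis by (simp add: mult.commute)
  qed
  have t2: "num (U k (y # v)) = Fend (num (U k v))" for v
  proof -
    have z: "0 \<notin> U k v" using U_ge2 by fastforce
    show ?thesis using xk by (simp add: U_Cons num_Suc_image[OF finite_U z])
  qed
  have "(\<Sum>v\<in>shuffles (x # xs) (y # ys). num (U k v)) = Fend (brk ?c) * Fend ?S1 + Fend ?S2"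
    unfolding s by (simp add: t1 t2 sum_distrib_left Fend_sum cong: sum.cong)
  moreover have "Fk (?c + 1) (bfact ?d) = Fk (?c + 1) (brk ?d) * Fk (?c + 2) (bfact (length ys))"
  proof -
    have "bfact ?d = brk ?d * Fend (bfact (length ys))" by simp
    then have "Fk (?c + 1) (bfact ?d) = Fk (?c + 1) (brk ?d) * Fk (?c + 1) (Fend (bfact (length ys)))"
      by (simp only: Fk_mult)
    also have "Fk (?c + 1) (Fend (bfact (length ys))) = Fk (?c + 2) (bfact (length ys))"
    proof -
      have e: "?c + 2 = Suc (?c + 1)" by simp
      show ?thesis by (simp only: e Fk_Suc')
    qed
    finally show ?thesis .
  qed
  moreover have "Fend ?S1 * Fk (?c + 1) (bfact ?d) = Fk 2 (bfact (?c + length ys))"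
  proof -
    have "Fend (?S1 * Fk ?c (bfact ?d)) = Fend (Fend (bfact (length xs + ?d)))"
      using IH1 by (rule arg_cong)
    moreover have "length xs + ?d = ?c + length ys" by simp
    ultimately show ?thesis by (simp only: Fend_mult Fend_Fk Fk_2)
  qed
  moreover have "Fend ?S2 * Fk (?c + 2) (bfact (length ys)) = Fk 2 (bfact (?c + length ys))"
  proof -
    have "Fend (?S2 * Fk (?c + 1) (bfact (length ys))) = Fend (Fend (bfact (?c + length ys)))"
      using IH2 by (rule arg_cong)
    moreover have "?c + 1 + 1 = ?c + 2" by simp
    ultimately show ?thesis by (simp only: Fend_mult Fend_Fk Fk_2)
  qed
  moreover have "Fend (brk ?c) + Fk (?c + 1) (brk ?d) = Fend (brk (?c + ?d))"
    using brk_add[of ?c ?d] by simp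
  ultimately have "(\<Sum>v\<in>shuffles (x # xs) (y # ys). num (U k v)) * Fk (?c + 1) (bfact ?d)
      = Fk 2 (bfact (?c + length ys)) * Fend (brk (?c + ?d))"
    by (rule ring_aux)
  also have "\<dots> = Fend (bfact (?c + ?d))"
  proof -
    have "?c + ?d = Suc (?c + length ys)" by simp
    then have "bfact (?c + ?d) = brk (?c + ?d) * Fend (bfact (?c + length ys))"
      by (simp only: bfact.simps)
    then show ?thesis by (simp only: Fend_mult Fk_2 mult.commute)
  qed
  finally show ?case by simp
qed


definition ok :: "(nat \<times> nat) set \<Rightarrow> nat list \<Rightarrow> bool" where
  "ok R w \<longleftrightarrow> sorted_wrt (\<lambda>x y. (y, x) \<notin> R) w"

definition lin :: "nat set \<Rightarrow> (nat \<times> nat) set \<Rightarrow> nat list set" where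
  "lin X R = {w. distinct w \<and> set w = X \<and> ok R w}"

lemma ok_Nil[simp]: "ok R []" by (simp add: ok_def)
lemma ok_Cons: "ok R (x # v) \<longleftrightarrow> (\<forall>y\<in>set v. (y, x) \<notin> R) \<and> ok R v"
  by (simp add: ok_def)

lemma linext_lin: "linext n P = lin {1..n} P"
proof -
  have "(\<forall>p q. p < length w \<and> q < length w \<and> (w ! p, w ! q) \<in> P \<and> w ! p \<noteq> w ! q \<longrightarrow> p < q)
        \<longleftrightarrow> ok P w" if d: "distinct w" for w
  proof
    assume H: "\<forall>p q. p < length w \<and> q < length w \<and> (w ! p, w ! q) \<in> P \<and> w ! p \<noteq> w ! q \<longrightarrow> p < q"
    show "ok P w" unfolding ok_def sorted_wrt_iff_nth_less
    proof (intro allI impI)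
      fix i j assume ij: "i < j" "j < length w"
      show "(w ! j, w ! i) \<notin> P"
      proof
        assume "(w ! j, w ! i) \<in> P"
        moreover have "w ! j \<noteq> w ! i" using d ij by (simp add: nth_eq_iff_index_eq)
        ultimately have "j < i" using H ij by auto
        then show False using ij by simp
      qed
    qed
  next
    assume "ok P w"
    then have O: "\<And>i j. i < j \<Longrightarrow> j < length w \<Longrightarrow> (w ! j, w ! i) \<notin> P"
      unfolding ok_def sorted_wrt_iff_nth_less by blast
    show "\<forall>p q. p < length w \<and> q < length w \<and> (w ! p, w ! q) \<in> P \<and> w ! p \<noteq> w ! q \<longrightarrow> p < q"
    proof (intro allI impI)
      fix p q assume a: "p < length w \<and> q < length w \<and> (w ! p, w ! q) \<in> P \<and> w ! p \<noteq> w ! q"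
      then have "p \<noteq> q" by auto
      moreover have "\<not> q < p" using O[of q p] a by auto
      ultimately show "p < q" by simp
    qed
  qed
  then show ?thesis unfolding linext_def lin_def is_perm_def by auto
qed

lemma finite_lin: "finite X \<Longrightarrow> finite (lin X R)"
  by (rule finite_subset[of _ "{xs. set xs \<subseteq> X \<and> length xs \<le> card X}"])
     (auto simp: lin_def distinct_card[symmetric] intro: finite_lists_length_le)

lemma lin_empty: "lin {} R = {[]}"
  by (auto simp: lin_def)

lemma ok_filter: "ok R w \<Longrightarrow> ok R (filter P w)"
  unfolding ok_def by (rule sorted_wrt_filter)

lemma ok_shuffles:
  assumes "ok R a" "ok R b" "\<forall>x\<in>set a. \<forall>y\<in>set b. (x, y) \<notin> R \<and> (y, x) \<notin> R"
    "v \<in> shuffles a b"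
  shows "ok R v"
  using assms
proof (induction a b arbitrary: v rule: shuffles.induct)
  case (1 ys) then show ?case by simp
next
  case (2 xs) then show ?case by (simp add: shuffles_Nil2)
next
  case (3 x xs y ys)
  from "3.prems"(4) consider (l) v' where "v = x # v'" "v' \<in> shuffles xs (y # ys)"
    | (r) v' where "v = y # v'" "v' \<in> shuffles (x # xs) ys" by auto
  then show ?case
  proof cases
    case l
    have "ok R v'" using "3.IH"(1)[of v'] "3.prems" l by (simp add: ok_Cons)
    moreover have "\<forall>z\<in>set v'. (z, x) \<notin> R"
      using set_shuffles[OF l(2)] "3.prems" by (auto simp: ok_Cons)
    ultimately show ?thesis using l by (simp add: ok_Cons)
  next
    case r
    have "ok R v'" using "3.IH"(2)[of v'] "3.prems" r by (simp add: ok_Cons)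
    moreover have "\<forall>z\<in>set v'. (z, y) \<notin> R"
      using set_shuffles[OF r(2)] "3.prems" by (auto simp: ok_Cons)
    ultimately show ?thesis using r by (simp add: ok_Cons)
  qed
qed

lemma lin_union:
  assumes "A \<inter> B = {}" "\<forall>x\<in>A. \<forall>y\<in>B. (x, y) \<notin> R \<and> (y, x) \<notin> R"
  shows "lin (A \<union> B) R = (\<Union>a\<in>lin A R. \<Union>b\<in>lin B R. shuffles a b)"
proof
  show "lin (A \<union> B) R \<subseteq> (\<Union>a\<in>lin A R. \<Union>b\<in>lin B R. shuffles a b)"
  proof
    fix w assume w: "w \<in> lin (A \<union> B) R"
    let ?a = "filter (\<lambda>x. x \<in> A) w" and ?b = "filter (\<lambda>x. x \<notin> A) w"
    have w1: "distinct w" "set w = A \<union> B" "ok R w" using w by (auto simp: lin_def)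
    have "set ?a = A" unfolding set_filter w1(2) by blast
    then have "?a \<in> lin A R" using w1 by (simp add: lin_def ok_filter)
    moreover have "set ?b = B" unfolding set_filter w1(2) using assms(1) by blast
    then have "?b \<in> lin B R" using w1 by (simp add: lin_def ok_filter)
    moreover have "w \<in> shuffles ?a ?b" by (rule partition_in_shuffles)
    ultimately show "w \<in> (\<Union>a\<in>lin A R. \<Union>b\<in>lin B R. shuffles a b)" by (intro UN_I)
  qed
next
  show "(\<Union>a\<in>lin A R. \<Union>b\<in>lin B R. shuffles a b) \<subseteq> lin (A \<union> B) R"
  proof (rule subsetI)
    fix v assume "v \<in> (\<Union>a\<in>lin A R. \<Union>b\<in>lin B R. shuffles a b)"
    then obtain a b where a: "a \<in> lin A R" and b: "b \<in> lin B R" and v: "v \<in> shuffles a b" by blast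
    have a1: "distinct a" "set a = A" "ok R a" using a by (simp_all add: lin_def)
    have b1: "distinct b" "set b = B" "ok R b" using b by (simp_all add: lin_def)
    have "distinct v" by (rule distinct_disjoint_shuffles[OF a1(1) b1(1) _ v]) (use assms(1) a1(2) b1(2) in simp)
    moreover have "set v = A \<union> B" using set_shuffles[OF v] a1(2) b1(2) by simp
    moreover have "ok R v" by (rule ok_shuffles[OF a1(3) b1(3) _ v]) (use assms(2) a1(2) b1(2) in simp)
    ultimately show "v \<in> lin (A \<union> B) R" by (simp add: lin_def)
  qed
qed

lemma sum_lin_union:
  assumes "finite A" "finite B" "A \<inter> B = {}" "\<forall>x\<in>A. \<forall>y\<in>B. (x, y) \<notin> R \<and> (y, x) \<notin> R"
  shows "(\<Sum>w\<in>lin (A \<union> B) R. f w) = (\<Sum>a\<in>lin A R. \<Sum>b\<in>lin B R. \<Sum>v\<in>shuffles a b. f v)"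
proof -
  have key: "a = a' \<and> b = b'" if "a \<in> lin A R" "a' \<in> lin A R" "b \<in> lin B R" "b' \<in> lin B R"
     "v \<in> shuffles a b" "v \<in> shuffles a' b'" for a a' b b' v
  proof -
    have d1: "set a \<inter> set b = {}" "set a' \<inter> set b' = {}" using that assms(3) by (auto simp: lin_def)
    have sa: "set a = set a'" using that by (simp add: lin_def)
    have "a = filter (\<lambda>x. x \<in> set a) v" using filter_shuffles_disjoint1(1)[OF d1(1) that(5)] by simp
    moreover have "a' = filter (\<lambda>x. x \<in> set a) v" using filter_shuffles_disjoint1(1)[OF d1(2) that(6)] sa by simp
    moreover have "b = filter (\<lambda>x. x \<notin> set a) v" using filter_shuffles_disjoint1(2)[OF d1(1) that(5)] by simp
    moreover have "b' = filter (\<lambda>x. x \<notin> set a) v" using filter_shuffles_disjoint1(2)[OF d1(2) that(6)] sa by simp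
    ultimately show ?thesis by simp
  qed
  have "(\<Sum>w\<in>lin (A \<union> B) R. f w) = (\<Sum>w\<in>(\<Union>a\<in>lin A R. \<Union>b\<in>lin B R. shuffles a b). f w)"
    using lin_union[OF assms(3,4)] by simp
  also have "\<dots> = (\<Sum>a\<in>lin A R. \<Sum>w\<in>(\<Union>b\<in>lin B R. shuffles a b). f w)"
    by (rule sum.UNION_disjoint) (use assms key in \<open>auto simp: finite_lin\<close>)
  also have "\<dots> = (\<Sum>a\<in>lin A R. \<Sum>b\<in>lin B R. \<Sum>v\<in>shuffles a b. f v)"
    by (intro sum.cong refl sum.UNION_disjoint) (use assms key in \<open>auto simp: finite_lin\<close>)
  finally show ?thesis .
qed

lemma ok_restrict: "set w \<subseteq> X \<Longrightarrow> ok R w \<longleftrightarrow> ok (R \<inter> X \<times> X) w"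
  unfolding ok_def by (induction w) auto

lemma lin_restrict: "lin X R = lin X (R \<inter> X \<times> X)"
  unfolding lin_def using ok_restrict by auto

lemma lin_shift:
  "lin ((\<lambda>x. x + s) ` X) R = map (\<lambda>x. x + s) ` lin X {(i, j). (i + s, j + s) \<in> R}"
proof
  show "map (\<lambda>x. x + s) ` lin X {(i, j). (i + s, j + s) \<in> R} \<subseteq> lin ((\<lambda>x. x + s) ` X) R"
    by (auto simp: lin_def ok_def sorted_wrt_map distinct_map inj_on_def)
next
  show "lin ((\<lambda>x. x + s) ` X) R \<subseteq> map (\<lambda>x. x + s) ` lin X {(i, j). (i + s, j + s) \<in> R}"
  proof
    fix w assume w: "w \<in> lin ((\<lambda>x. x + s) ` X) R"
    let ?b = "map (\<lambda>x. x - s) w"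
    have ge: "\<forall>x\<in>set w. s \<le> x" using w by (auto simp: lin_def)
    then have wb: "w = map (\<lambda>x. x + s) ?b" by (induction w) auto
    have "?b \<in> lin X {(i, j). (i + s, j + s) \<in> R}"
    proof -
      have "distinct (map (\<lambda>x. x + s) ?b)" using w wb by (simp add: lin_def)
      then have "distinct ?b" using distinct_map by blast
      moreover have sw: "set w = (\<lambda>x. x + s) ` X" using w by (simp add: lin_def)
      have "(\<lambda>x. x + s) ` set ?b = (\<lambda>x. x + s) ` X"
        by (simp only: list.set_map[symmetric] wb[symmetric] sw)
      then have "set ?b = X" by (simp add: inj_image_eq_iff inj_on_def)
      moreover have "ok R (map (\<lambda>x. x + s) ?b)" using w wb by (simp add: lin_def)
      then have "ok {(i, j). (i + s, j + s) \<in> R} ?b" by (simp add: ok_def sorted_wrt_map)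
      ultimately show ?thesis by (simp add: lin_def)
    qed
    then show "w \<in> map (\<lambda>x. x + s) ` lin X {(i, j). (i + s, j + s) \<in> R}" using wb by blast
  qed
qed

lemma image_shift_atLeastAtMost: "(\<lambda>x. x + s) ` {a..b} = {a + s..b + (s::nat)}"
proof -
  have "(\<lambda>x. x + s) = (+) s" by (simp add: fun_eq_iff add.commute)
  then show ?thesis by (simp only: image_add_atLeastAtMost)
qed


definition up :: "(nat \<times> nat) set \<Rightarrow> nat \<Rightarrow> nat set" where
  "up P i = {j. (i, j) \<in> P}"

definition good :: "nat \<Rightarrow> (nat \<times> nat) set \<Rightarrow> bool" where
  "good n P \<longleftrightarrow> P \<subseteq> {1..n} \<times> {1..n} \<and> (\<forall>i\<in>{1..n}. (i, i) \<in> P) \<and> trans P \<and> antisym P \<and>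
     (\<forall>i\<in>{1..n}. \<exists>a b. up P i = {a..b}) \<and>
     (\<forall>j i1 i2. (i1, j) \<in> P \<longrightarrow> (i2, j) \<in> P \<longrightarrow> (i1, i2) \<in> P \<or> (i2, i1) \<in> P)"

definition roots :: "nat \<Rightarrow> (nat \<times> nat) set \<Rightarrow> nat set" where
  "roots n P = {r\<in>{1..n}. \<forall>i. (i, r) \<in> P \<longrightarrow> i = r}"

definition hk :: "nat \<Rightarrow> (nat \<times> nat) set \<Rightarrow> ratfun" where
  "hk n P = (\<Prod>i\<in>{1..n}. inverse (vs (up P i)))"

lemma goodD:
  assumes "good n P"
  shows "\<And>i j. (i, j) \<in> P \<Longrightarrow> i \<in> {1..n} \<and> j \<in> {1..n}"
    and "\<And>i. i \<in> {1..n} \<Longrightarrow> (i, i) \<in> P"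
    and "\<And>i j k. (i, j) \<in> P \<Longrightarrow> (j, k) \<in> P \<Longrightarrow> (i, k) \<in> P"
    and "\<And>i j. (i, j) \<in> P \<Longrightarrow> (j, i) \<in> P \<Longrightarrow> i = j"
    and "\<And>i. i \<in> {1..n} \<Longrightarrow> \<exists>a b. up P i = {a..b}"
    and "\<And>j i1 i2. (i1, j) \<in> P \<Longrightarrow> (i2, j) \<in> P \<Longrightarrow> (i1, i2) \<in> P \<or> (i2, i1) \<in> P"
  using assms unfolding good_def
     apply -
     apply blast
    apply blast
   apply (meson transD)
  apply (meson antisymD)
  apply blast
  apply blast
  done

lemma up_convex:
  assumes "good n P" "i \<in> {1..n}" "x \<in> up P i" "y \<in> up P i" "x \<le> z" "z \<le> y"
  shows "z \<in> up P i"
proof -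
  obtain a b where ab: "up P i = {a..b}" using goodD(5)[OF assms(1,2)] by blast
  show ?thesis using assms(3-6) unfolding ab by simp
qed

lemma i_in_up: "good n P \<Longrightarrow> i \<in> {1..n} \<Longrightarrow> i \<in> up P i"
  by (simp add: up_def goodD(2))

lemma up_sub: "good n P \<Longrightarrow> up P i \<subseteq> {1..n}"
  unfolding up_def using goodD(1) by blast

lemma root_left:
  assumes g: "good n P" and r: "r \<in> roots n P" and i: "i \<in> {1..n}" "i < r"
  shows "up P i \<subseteq> {1..r - 1}"
proof
  fix j assume j: "j \<in> up P i"
  have j1: "j \<in> {1..n}" using up_sub[OF g] j by blast
  have "j < r"
  proof (rule ccontr)
    assume "\<not> j < r"
    then have "r \<in> up P i" using up_convex[OF g i(1) i_in_up[OF g i(1)] j] i(2) by simp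
    then have "(i, r) \<in> P" by (simp add: up_def)
    then have "i = r" using r by (simp add: roots_def)
    then show False using i(2) by simp
  qed
  then show "j \<in> {1..r - 1}" using j1 by simp
qed

lemma root_right:
  assumes g: "good n P" and r: "r \<in> roots n P" and i: "i \<in> {1..n}" "r < i"
  shows "up P i \<subseteq> {r + 1..n}"
proof
  fix j assume j: "j \<in> up P i"
  have j1: "j \<in> {1..n}" using up_sub[OF g] j by blast
  have "r < j"
  proof (rule ccontr)
    assume "\<not> r < j"
    then have "r \<in> up P i" using up_convex[OF g i(1) j i_in_up[OF g i(1)]] i(2) by simp
    then have "(i, r) \<in> P" by (simp add: up_def)
    then have "i = r" using r by (simp add: roots_def)
    then show False using i(2) by simp
  qed
  then show "j \<in> {r + 1..n}" using j1 by simp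
qed

lemma root_noncross:
  assumes g: "good n P" and r: "r \<in> roots n P"
  shows "\<forall>x\<in>{1..r - 1}. \<forall>y\<in>{r + 1..n}. (x, y) \<notin> P \<and> (y, x) \<notin> P"
proof (intro ballI conjI)
  fix x y assume x: "x \<in> {1..r - 1}" and y: "y \<in> {r + 1..n}"
  have rn: "r \<in> {1..n}" using r by (simp add: roots_def)
  have x1: "x \<in> {1..n}" "x < r" using x rn by auto
  have y1: "y \<in> {1..n}" "r < y" using y by auto
  show "(x, y) \<notin> P"
  proof
    assume "(x, y) \<in> P"
    then have "y \<in> up P x" by (simp add: up_def)
    then show False using root_left[OF g r x1] y1 by auto
  qed
  show "(y, x) \<notin> P"
  proof
    assume "(y, x) \<in> P"
    then have "x \<in> up P y" by (simp add: up_def)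
    then show False using root_right[OF g r y1] x1 by auto
  qed
qed

definition lrel :: "nat \<Rightarrow> (nat \<times> nat) set \<Rightarrow> (nat \<times> nat) set" where
  "lrel k P = P \<inter> {1..k} \<times> {1..k}"

definition rrel :: "nat \<Rightarrow> nat \<Rightarrow> (nat \<times> nat) set \<Rightarrow> (nat \<times> nat) set" where
  "rrel s l P = {(i, j). (i + s, j + s) \<in> P} \<inter> {1..l} \<times> {1..l}"

lemma up_lrel:
  assumes "up P i \<subseteq> {1..k}"
  shows "up (lrel k P) i = (if i \<in> {1..k} then up P i else {})"
  using assms by (auto simp: up_def lrel_def)

lemma up_rrel_shift:
  assumes "up P (i + s) \<subseteq> {s + 1..s + l}" "i \<in> {1..l}"
  shows "(\<lambda>x. x + s) ` up (rrel s l P) i = up P (i + s)"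
proof
  show "(\<lambda>x. x + s) ` up (rrel s l P) i \<subseteq> up P (i + s)"
    by (auto simp: up_def rrel_def)
next
  show "up P (i + s) \<subseteq> (\<lambda>x. x + s) ` up (rrel s l P) i"
  proof
    fix j assume j: "j \<in> up P (i + s)"
    then have j1: "j \<in> {s + 1..s + l}" using assms(1) by blast
    then have "j - s \<in> up (rrel s l P) i" using j assms(2) by (auto simp: up_def rrel_def)
    moreover have "j = j - s + s" using j1 by simp
    ultimately show "j \<in> (\<lambda>x. x + s) ` up (rrel s l P) i" by (rule rev_image_eqI)
  qed
qed

lemma good_lrel:
  assumes g: "good n P" and r: "r \<in> roots n P"
  shows "good (r - 1) (lrel (r - 1) P)"
proof -
  let ?k = "r - 1"
  have rn: "r \<in> {1..n}" using r by (simp add: roots_def)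
  have sub: "up P i \<subseteq> {1..?k}" if "i \<in> {1..?k}" for i
  proof -
    have h: "i \<in> {1..n}" "i < r" using that rn by auto
    show ?thesis using root_left[OF g r h] .
  qed
  have 1: "lrel ?k P \<subseteq> {1..?k} \<times> {1..?k}" by (auto simp: lrel_def)
  have 2: "\<forall>i\<in>{1..?k}. (i, i) \<in> lrel ?k P" using goodD(2)[OF g] rn by (auto simp: lrel_def)
  have 3: "trans (lrel ?k P)" unfolding trans_def lrel_def using goodD(3)[OF g] by blast
  have 4: "antisym (lrel ?k P)" unfolding antisym_def lrel_def using goodD(4)[OF g] by blast
  have 5: "\<forall>i\<in>{1..?k}. \<exists>a b. up (lrel ?k P) i = {a..b}"
  proof
    fix i assume i: "i \<in> {1..?k}"
    then have "i \<in> {1..n}" using rn by auto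
    then show "\<exists>a b. up (lrel ?k P) i = {a..b}" using goodD(5)[OF g] up_lrel[OF sub[OF i]] i by simp
  qed
  have 6: "\<forall>j i1 i2. (i1, j) \<in> lrel ?k P \<longrightarrow> (i2, j) \<in> lrel ?k P \<longrightarrow> (i1, i2) \<in> lrel ?k P \<or> (i2, i1) \<in> lrel ?k P"
    unfolding lrel_def using goodD(6)[OF g] by blast
  show ?thesis unfolding good_def using 1 2 3 4 5 6 by blast
qed

lemma good_rrel:
  assumes g: "good n P" and r: "r \<in> roots n P"
  shows "good (n - r) (rrel r (n - r) P)"
proof -
  let ?l = "n - r"
  have rn: "r \<in> {1..n}" using r by (simp add: roots_def)
  have sub: "up P (i + r) \<subseteq> {r + 1..r + ?l}" if "i \<in> {1..?l}" for i
  proof -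
    have h: "i + r \<in> {1..n}" "r < i + r" using that rn by auto
    have "r + ?l = n" using rn by simp
    then show ?thesis using root_right[OF g r h] by simp
  qed
  have 1: "rrel r ?l P \<subseteq> {1..?l} \<times> {1..?l}" by (auto simp: rrel_def)
  have 2: "\<forall>i\<in>{1..?l}. (i, i) \<in> rrel r ?l P" using goodD(2)[OF g] rn by (auto simp: rrel_def)
  have 3: "trans (rrel r ?l P)" unfolding trans_def rrel_def using goodD(3)[OF g] by blast
  have 4: "antisym (rrel r ?l P)" unfolding antisym_def rrel_def using goodD(4)[OF g] by fastforce
  have 5: "\<forall>i\<in>{1..?l}. \<exists>a b. up (rrel r ?l P) i = {a..b}"
  proof
    fix i assume i: "i \<in> {1..?l}"
    then have i1: "i + r \<in> {1..n}" using rn by auto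
    obtain a b where ab: "up P (i + r) = {a..b}" using goodD(5)[OF g i1] by blast
    have sh: "(\<lambda>x. x + r) ` up (rrel r ?l P) i = {a..b}" using up_rrel_shift[OF sub[OF i] i] ab by simp
    have "i + r \<in> {a..b}" using i_in_up[OF g i1] ab by simp
    then have ar: "r + 1 \<le> a" using sub[OF i] ab by auto
    have "up (rrel r ?l P) i = {a - r..b - r}"
    proof
      show "up (rrel r ?l P) i \<subseteq> {a - r..b - r}"
      proof
        fix j assume "j \<in> up (rrel r ?l P) i"
        then have "j + r \<in> {a..b}" using sh by blast
        then show "j \<in> {a - r..b - r}" by auto
      qed
    next
      show "{a - r..b - r} \<subseteq> up (rrel r ?l P) i"
      proof
        fix j assume j: "j \<in> {a - r..b - r}"
        then have "j + r \<in> {a..b}" using ar by auto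
        then have "j + r \<in> (\<lambda>x. x + r) ` up (rrel r ?l P) i" using sh by simp
        then show "j \<in> up (rrel r ?l P) i" by auto
      qed
    qed
    then show "\<exists>a b. up (rrel r ?l P) i = {a..b}" by blast
  qed
  have 6: "\<forall>j i1 i2. (i1, j) \<in> rrel r ?l P \<longrightarrow> (i2, j) \<in> rrel r ?l P \<longrightarrow> (i1, i2) \<in> rrel r ?l P \<or> (i2, i1) \<in> rrel r ?l P"
    unfolding rrel_def using goodD(6)[OF g] by blast
  show ?thesis unfolding good_def using 1 2 3 4 5 6 by blast
qed

lemma exists_root:
  assumes g: "good n P"
  shows "j \<in> {1..n} \<Longrightarrow> \<exists>r\<in>roots n P. (r, j) \<in> P"
proof (induction "card {i. (i, j) \<in> P}" arbitrary: j rule: less_induct)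
  case less
  show ?case
  proof (cases "j \<in> roots n P")
    case True
    then show ?thesis using goodD(2)[OF g less.prems] by blast
  next
    case False
    then obtain i where i: "(i, j) \<in> P" "i \<noteq> j" using less.prems by (auto simp: roots_def)
    have i1: "i \<in> {1..n}" using goodD(1)[OF g i(1)] by blast
    have sub: "{x. (x, i) \<in> P} \<subseteq> {x. (x, j) \<in> P}" using goodD(3)[OF g _ i(1)] by blast
    have "j \<notin> {x. (x, i) \<in> P}" using goodD(4)[OF g i(1)] i(2) by blast
    moreover have "j \<in> {x. (x, j) \<in> P}" using goodD(2)[OF g less.prems] by simp
    ultimately have psub: "{x. (x, i) \<in> P} \<subset> {x. (x, j) \<in> P}" using sub by blast
    have fin: "finite {x. (x, j) \<in> P}"
      by (rule finite_subset[of _ "{1..n}"]) (use goodD(1)[OF g] in blast, simp)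
    have "card {x. (x, i) \<in> P} < card {x. (x, j) \<in> P}" by (rule psubset_card_mono[OF fin psub])
    then obtain r where "r \<in> roots n P" "(r, i) \<in> P" using less.hyps[OF _ i1] by blast
    then show ?thesis using goodD(3)[OF g _ i(1)] by blast
  qed
qed

lemma root_unique:
  assumes g: "good n P" and "r1 \<in> roots n P" "r2 \<in> roots n P" "(r1, j) \<in> P" "(r2, j) \<in> P"
  shows "r1 = r2"
  using goodD(6)[OF g assms(4,5)] assms(2,3) by (auto simp: roots_def)

lemma finite_roots: "finite (roots n P)"
  by (rule finite_subset[of _ "{1..n}"]) (auto simp: roots_def)

lemma sum_roots_vs:
  assumes g: "good n P"
  shows "(\<Sum>r\<in>roots n P. vs (up P r)) = brk n"
proof -
  have U: "(\<Union>r\<in>roots n P. up P r) = {1..n}"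
  proof
    show "(\<Union>r\<in>roots n P. up P r) \<subseteq> {1..n}" using up_sub[OF g] by blast
    show "{1..n} \<subseteq> (\<Union>r\<in>roots n P. up P r)"
    proof
      fix j assume "j \<in> {1..n}"
      then obtain r where "r \<in> roots n P" "(r, j) \<in> P" using exists_root[OF g] by blast
      then show "j \<in> (\<Union>r\<in>roots n P. up P r)" by (auto simp: up_def)
    qed
  qed
  have "(\<Sum>r\<in>roots n P. vs (up P r)) = (\<Sum>r\<in>roots n P. \<Sum>i\<in>up P r. var i)"
    by (simp add: vs_def)
  also have "\<dots> = (\<Sum>i\<in>(\<Union>r\<in>roots n P. up P r). var i)"
  proof (rule sum.UNION_disjoint[symmetric])
    show "finite (roots n P)" by (rule finite_roots)
    show "\<forall>r\<in>roots n P. finite (up P r)" using up_sub[OF g] by (meson finite_atLeastAtMost finite_subset)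
    show "\<forall>r1\<in>roots n P. \<forall>r2\<in>roots n P. r1 \<noteq> r2 \<longrightarrow> up P r1 \<inter> up P r2 = {}"
      using root_unique[OF g] by (auto simp: up_def)
  qed
  also have "\<dots> = brk n" unfolding U by (simp add: brk_def)
  finally show ?thesis .
qed


lemma vs_up_nz: "good n P \<Longrightarrow> i \<in> {1..n} \<Longrightarrow> vs (up P i) \<noteq> 0"
proof -
  assume g: "good n P" and i: "i \<in> {1..n}"
  have "finite (up P i)" using up_sub[OF g] by (meson finite_atLeastAtMost finite_subset)
  moreover have "up P i \<noteq> {}" using i_in_up[OF g i] by blast
  moreover have "0 \<notin> up P i" using up_sub[OF g] by fastforce
  ultimately show ?thesis by (rule vs_nz)
qed

lemma hk_split:
  assumes g: "good n P" and r: "r \<in> roots n P"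
  shows "hk n P * vs (up P r) = hk (r - 1) (lrel (r - 1) P) * Fk r (hk (n - r) (rrel r (n - r) P))"
proof -
  let ?k = "r - 1" and ?l = "n - r"
  let ?f = "\<lambda>i. inverse (vs (up P i))"
  have rn: "r \<in> {1..n}" using r by (simp add: roots_def)
  have split: "{1..n} = insert r ({1..?k} \<union> {r + 1..n})" using rn by auto
  have A: "(\<Prod>i\<in>{1..?k}. ?f i) = hk ?k (lrel ?k P)"
    unfolding hk_def
  proof (intro prod.cong refl)
    fix i assume i: "i \<in> {1..?k}"
    have h: "i \<in> {1..n}" "i < r" using i rn by auto
    show "?f i = inverse (vs (up (lrel ?k P) i))" using up_lrel[OF root_left[OF g r h]] i by simp
  qed
  have gr: "good ?l (rrel r ?l P)" by (rule good_rrel[OF g r])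
  have B: "Fk r (hk ?l (rrel r ?l P)) = (\<Prod>i\<in>{r + 1..n}. ?f i)"
  proof -
    have "Fk r (hk ?l (rrel r ?l P)) = (\<Prod>i\<in>{1..?l}. inverse (Fk r (vs (up (rrel r ?l P) i))))"
      by (simp add: hk_def Fk_prod Fk_inverse)
    also have "\<dots> = (\<Prod>i\<in>{1..?l}. ?f (i + r))"
    proof (intro prod.cong refl)
      fix i assume i: "i \<in> {1..?l}"
      have z: "0 \<notin> up (rrel r ?l P) i" using up_sub[OF gr] by fastforce
      have h: "i + r \<in> {1..n}" "r < i + r" using i rn by auto
      have "r + ?l = n" using rn by simp
      then have s: "up P (i + r) \<subseteq> {r + 1..r + ?l}" using root_right[OF g r h] by simp
      show "inverse (Fk r (vs (up (rrel r ?l P) i))) = ?f (i + r)"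
        by (simp only: Fk_vs[OF z] up_rrel_shift[OF s i])
    qed
    also have "\<dots> = (\<Prod>i\<in>(\<lambda>i. i + r) ` {1..?l}. ?f i)"
      by (rule prod.reindex[symmetric, unfolded comp_def]) (simp add: inj_on_def)
    also have "(\<lambda>i. i + r) ` {1..?l} = {r + 1..n}"
      using rn by (simp add: image_shift_atLeastAtMost add.commute)
    finally show ?thesis .
  qed
  have "hk n P = ?f r * ((\<Prod>i\<in>{1..?k}. ?f i) * (\<Prod>i\<in>{r + 1..n}. ?f i))"
    unfolding hk_def split by (subst prod.insert) (auto simp: prod.union_disjoint)
  then have "hk n P = ?f r * (hk ?k (lrel ?k P) * Fk r (hk ?l (rrel r ?l P)))"
    by (simp only: A B)
  moreover have "?f r * vs (up P r) = 1" using vs_up_nz[OF g rn] by simp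
  ultimately show ?thesis by (simp add: algebra_simps)
qed

lemma lin_roots:
  assumes g: "good n P" and n: "1 \<le> n"
  shows "lin {1..n} P = (\<Union>r\<in>roots n P. Cons r ` lin ({1..n} - {r}) P)"
proof
  show "lin {1..n} P \<subseteq> (\<Union>r\<in>roots n P. Cons r ` lin ({1..n} - {r}) P)"
  proof
    fix w assume w: "w \<in> lin {1..n} P"
    then have w1: "distinct w" "set w = {1..n}" "ok P w" by (simp_all add: lin_def)
    have "w \<noteq> []"
    proof
      assume "w = []"
      then have "{1..n} = ({}::nat set)" using w1(2) by simp
      then show False using n by simp
    qed
    then obtain r v where rv: "w = r # v" by (cases w) auto
    have "r \<in> set w" using rv by simp
    then have rn: "r \<in> {1..n}" using w1(2) by simp
    have v1: "distinct v" "r \<notin> set v" using w1(1) rv by simp_all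
    have "set w = insert r (set v)" using rv by simp
    then have sv: "set v = {1..n} - {r}" using w1(2) v1(2) by blast
    have okv: "ok P v" "\<forall>y\<in>set v. (y, r) \<notin> P" using w1(3) rv by (simp_all add: ok_Cons)
    have "r \<in> roots n P"
      unfolding roots_def
    proof (intro CollectI conjI allI impI)
      show "r \<in> {1..n}" by fact
      fix i assume i: "(i, r) \<in> P"
      show "i = r"
      proof (rule ccontr)
        assume "i \<noteq> r"
        moreover have "i \<in> {1..n}" using goodD(1)[OF g i] by blast
        ultimately have "i \<in> set v" using sv by blast
        then show False using okv(2) i by blast
      qed
    qed
    moreover have "v \<in> lin ({1..n} - {r}) P" using v1 sv okv by (simp add: lin_def)
    ultimately show "w \<in> (\<Union>r\<in>roots n P. Cons r ` lin ({1..n} - {r}) P)" using rv by blast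
  qed
next
  show "(\<Union>r\<in>roots n P. Cons r ` lin ({1..n} - {r}) P) \<subseteq> lin {1..n} P"
  proof
    fix w assume "w \<in> (\<Union>r\<in>roots n P. Cons r ` lin ({1..n} - {r}) P)"
    then obtain r v where r: "r \<in> roots n P" and v: "v \<in> lin ({1..n} - {r}) P" and w: "w = r # v" by blast
    have rn: "r \<in> {1..n}" using r by (simp add: roots_def)
    have v1: "distinct v" "set v = {1..n} - {r}" "ok P v" using v by (simp_all add: lin_def)
    have "\<forall>y\<in>set v. (y, r) \<notin> P" using r v1(2) unfolding roots_def by blast
    then have "ok P (r # v)" using v1(3) by (simp add: ok_Cons)
    moreover have "distinct (r # v)" using v1 by simp
    moreover have "set (r # v) = {1..n}" using v1(2) rn by (simp add: insert_Diff insert_absorb)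
    ultimately show "w \<in> lin {1..n} P" using w by (simp add: lin_def)
  qed
qed

lemma sum_Cons_image: "(\<Sum>w\<in>Cons r ` L. f w) = (\<Sum>v\<in>L. f (r # v))"
proof -
  have "inj_on (Cons r) L" by (simp add: inj_on_def)
  from sum.reindex[OF this, where g=f] show ?thesis by (simp add: comp_def)
qed

lemma sum_lin_roots:
  assumes g: "good n P" and n: "1 \<le> n"
  shows "(\<Sum>w\<in>lin {1..n} P. f w) = (\<Sum>r\<in>roots n P. \<Sum>v\<in>lin ({1..n} - {r}) P. f (r # v))"
proof -
  have "(\<Sum>w\<in>lin {1..n} P. f w) = (\<Sum>w\<in>(\<Union>r\<in>roots n P. Cons r ` lin ({1..n} - {r}) P). f w)"
    by (simp only: lin_roots[OF g n])
  also have "\<dots> = (\<Sum>r\<in>roots n P. \<Sum>w\<in>Cons r ` lin ({1..n} - {r}) P. f w)"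
    by (rule sum.UNION_disjoint) (auto simp: finite_roots finite_lin)
  also have "\<dots> = (\<Sum>r\<in>roots n P. \<Sum>v\<in>lin ({1..n} - {r}) P. f (r # v))"
    by (simp only: sum_Cons_image)
  finally show ?thesis .
qed

lemma filter_shuffle_gen:
  assumes "\<forall>x\<in>set a. P x" "\<forall>y\<in>set b. \<not> P y" "v \<in> shuffles a b"
  shows "filter P v = a"
proof -
  have "filter P v \<in> filter P ` shuffles a b" using assms by blast
  also have "\<dots> = shuffles (filter P a) (filter P b)" by (rule filter_shuffles)
  also have "filter P b = []" by (rule filter_False) (use assms(2) in blast)
  also have "filter P a = a" using assms(1) by (simp add: filter_id_conv)
  also have "shuffles a [] = {a}" by (rule shuffles_Nil2)
  finally show ?thesis by simp
qed

lemma wt_Cons_shuffle: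
  assumes r: "1 \<le> r" and a: "\<forall>x\<in>set a. x \<le> r - 1" and b: "\<forall>y\<in>set b. r < y"
    and v: "v \<in> shuffles a b"
  shows "wt (r # v) = wt_set (U (r - 1) v) * wt a * Fk r (wt (map (\<lambda>x. x - r) b))"
proof -
  let ?k = "r - 1"
  have S: "{i. 1 \<le> i \<and> i \<le> length (r # v) \<and> (r # v) ! (i - 1) \<le> ?k} = U ?k v"
  proof (rule set_eqI)
    fix i
    show "i \<in> {i. 1 \<le> i \<and> i \<le> length (r # v) \<and> (r # v) ! (i - 1) \<le> ?k} \<longleftrightarrow> i \<in> U ?k v"
    proof (cases "i \<le> 1")
      case True
      then show ?thesis using r by (auto simp: U_def)
    next
      case False
      then have "(r # v) ! (i - 1) = v ! (i - 2)" by (simp add: nth_Cons' numeral_2_eq_2)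
      then show ?thesis using False by (auto simp: U_def)
    qed
  qed
  have fa: "filter (\<lambda>x. x \<le> ?k) v = a"
    by (rule filter_shuffle_gen[OF _ _ v]) (use a b in auto)
  have fb: "filter (\<lambda>x. ?k + 1 < x) v = b"
  proof (rule filter_shuffle_gen)
    show "v \<in> shuffles b a" using v by (simp add: shuffles_commutes)
    show "\<forall>x\<in>set b. ?k + 1 < x" using b r by simp
    show "\<forall>y\<in>set a. \<not> ?k + 1 < y" using a r by auto
  qed
  have e: "?k + 1 = r" using r by simp
  have fb': "filter ((<) r) v = b" using fb e by simp
  have m: "map (\<lambda>x. x - ?k - 1) b = map (\<lambda>x. x - r) b" using r by simp
  show ?thesis
    by (simp only: wt.simps(2) Let_def S fa e fb' m)
qed


declare wt.simps(2)[simp del]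

lemma sum_shift_lin:
  "(\<Sum>b'\<in>lin {r + 1..r + l} P. wt (map (\<lambda>x. x - r) b')) = (\<Sum>b\<in>lin {1..l} (rrel r l P). wt b)"
proof -
  have img: "(\<lambda>x. x + r) ` {1..l} = {r + 1..r + l}" by (simp add: image_shift_atLeastAtMost add.commute)
  have L: "lin {r + 1..r + l} P = map (\<lambda>x. x + r) ` lin {1..l} (rrel r l P)"
  proof -
    have "lin ((\<lambda>x. x + r) ` {1..l}) P = map (\<lambda>x. x + r) ` lin {1..l} {(i, j). (i + r, j + r) \<in> P}"
      by (rule lin_shift)
    then have "lin {r + 1..r + l} P = map (\<lambda>x. x + r) ` lin {1..l} {(i, j). (i + r, j + r) \<in> P}"
      by (simp only: img)
    also have "lin {1..l} {(i, j). (i + r, j + r) \<in> P} = lin {1..l} (rrel r l P)"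
      unfolding rrel_def by (rule lin_restrict)
    finally show ?thesis .
  qed
  have inj: "inj_on (map (\<lambda>x. x + r)) (lin {1..l} (rrel r l P))"
  proof -
    have "inj (\<lambda>x::nat. x + r)" by (simp add: inj_on_def)
    then show ?thesis by (intro inj_onI) (simp add: inj_map_eq_map)
  qed
  have "(\<Sum>b'\<in>lin {r + 1..r + l} P. wt (map (\<lambda>x. x - r) b'))
      = (\<Sum>b\<in>lin {1..l} (rrel r l P). wt (map (\<lambda>x. x - r) (map (\<lambda>x. x + r) b)))"
    unfolding L using sum.reindex[OF inj, where g = "\<lambda>b'. wt (map (\<lambda>x. x - r) b')"] by (simp add: comp_def)
  also have "\<dots> = (\<Sum>b\<in>lin {1..l} (rrel r l P). wt b)" by (simp add: comp_def)
  finally show ?thesis .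
qed

lemma sum_left_lin: "(\<Sum>a\<in>lin {1..k} P. wt a) = (\<Sum>a\<in>lin {1..k} (lrel k P). wt a)"
proof -
  have "lin {1..k} P = lin {1..k} (lrel k P)" unfolding lrel_def by (rule lin_restrict)
  then show ?thesis by (simp only:)
qed

lemma inner_shuffle_sum:
  assumes r: "1 \<le> r" and a: "a \<in> lin {1..r - 1} P" and b: "b \<in> lin {r + 1..r + l} P"
  shows "(\<Sum>v\<in>shuffles a b. wt (r # v)) =
    wt a * Fk r (wt (map (\<lambda>x. x - r) b)) * (Fend (bfact (r - 1 + l)) / (Fk r (bfact l) * bfact (r - 1)))"
proof -
  let ?k = "r - 1"
  have sa: "set a = {1..?k}" and da: "distinct a" using a by (simp_all add: lin_def)
  have sb: "set b = {r + 1..r + l}" and db: "distinct b" using b by (simp_all add: lin_def)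
  have la: "length a = ?k" using distinct_card[OF da] sa by simp
  have lb: "length b = l" using distinct_card[OF db] sb by simp
  have a1: "\<forall>x\<in>set a. x \<le> ?k" using sa by simp
  have b1: "\<forall>y\<in>set b. r < y" using sb by simp
  have b2: "\<forall>y\<in>set b. ?k < y" using sb by auto
  have w: "wt (r # v) = (num (U ?k v) / bfact ?k) * (wt a * Fk r (wt (map (\<lambda>x. x - r) b)))"
    if v: "v \<in> shuffles a b" for v
  proof -
    have "card (U ?k v) = ?k"
      using filter_small_shuffle[OF a1 b2 v] la by (simp add: card_U)
    then show ?thesis using wt_Cons_shuffle[OF r a1 b1 v] by (simp add: wt_set_num)
  qed
  have sig: "(\<Sum>v\<in>shuffles a b. num (U ?k v)) * Fk r (bfact l) = Fend (bfact (?k + l))"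
    using sigma_identity[OF a1 b2] la lb r by simp
  have nz: "Fk r (bfact l) \<noteq> 0" by (rule Fk_nz[OF bfact_nz])
  have "(\<Sum>v\<in>shuffles a b. wt (r # v)) =
     (\<Sum>v\<in>shuffles a b. num (U ?k v)) / bfact ?k * (wt a * Fk r (wt (map (\<lambda>x. x - r) b)))"
    by (simp add: w sum_distrib_right sum_divide_distrib)
  also have "(\<Sum>v\<in>shuffles a b. num (U ?k v)) = Fend (bfact (?k + l)) / Fk r (bfact l)"
    using sig nz by (simp add: eq_divide_eq)
  finally show ?thesis by (simp add: field_simps)
qed

lemma sum_sep:
  "(\<Sum>a\<in>A. \<Sum>b\<in>B. f a * Fk r (g b) * C) = (\<Sum>a\<in>A. f a) * Fk r (\<Sum>b\<in>B. g b) * C"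
proof -
  have "(\<Sum>a\<in>A. f a) * Fk r (\<Sum>b\<in>B. g b) * C = (\<Sum>a\<in>A. f a * Fk r (\<Sum>b\<in>B. g b) * C)"
    by (simp add: sum_distrib_right)
  also have "\<dots> = (\<Sum>a\<in>A. \<Sum>b\<in>B. f a * Fk r (g b) * C)"
    by (intro sum.cong refl) (simp add: Fk_sum sum_distrib_left sum_distrib_right)
  finally show ?thesis by simp
qed

theorem hook:
  "good n P \<Longrightarrow> (\<Sum>w\<in>lin {1..n} P. wt w) = bfact n * hk n P"
proof (induction n arbitrary: P rule: less_induct)
  case (less n)
  note g = less.prems
  show ?case
  proof (cases "n = 0")
    case True
    then show ?thesis by (simp add: lin_empty hk_def)
  next
    case False
    then have n1: "1 \<le> n" by simp
    have T: "(\<Sum>v\<in>lin ({1..n} - {r}) P. wt (r # v)) = hk n P * vs (up P r) * Fend (bfact (n - 1))"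
      if r: "r \<in> roots n P" for r
    proof -
      let ?k = "r - 1" and ?l = "n - r"
      let ?C = "Fend (bfact (?k + ?l)) / (Fk r (bfact ?l) * bfact ?k)"
      have rn: "r \<in> {1..n}" using r by (simp add: roots_def)
      have e1: "{1..n} - {r} = {1..?k} \<union> {r + 1..r + ?l}" using rn by auto
      have disj: "{1..?k} \<inter> {r + 1..r + ?l} = {}" by auto
      have kn: "?k < n" and ln: "?l < n" using rn by auto
      have nc: "\<forall>x\<in>{1..?k}. \<forall>y\<in>{r + 1..r + ?l}. (x, y) \<notin> P \<and> (y, x) \<notin> P"
        using root_noncross[OF g r] rn by simp
      have "(\<Sum>v\<in>lin ({1..n} - {r}) P. wt (r # v)) =
          (\<Sum>a\<in>lin {1..?k} P. \<Sum>b\<in>lin {r + 1..r + ?l} P. \<Sum>v\<in>shuffles a b. wt (r # v))"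
        unfolding e1 by (rule sum_lin_union) (use disj nc in auto)
      also have "\<dots> = (\<Sum>a\<in>lin {1..?k} P. \<Sum>b\<in>lin {r + 1..r + ?l} P.
            wt a * Fk r (wt (map (\<lambda>x. x - r) b)) * ?C)"
      proof (rule sum.cong[OF refl], rule sum.cong[OF refl])
        fix a b assume a: "a \<in> lin {1..?k} P" and b: "b \<in> lin {r + 1..r + ?l} P"
        show "(\<Sum>v\<in>shuffles a b. wt (r # v)) = wt a * Fk r (wt (map (\<lambda>x. x - r) b)) * ?C"
          by (rule inner_shuffle_sum[OF _ a b]) (use rn in simp)
      qed
      also have "\<dots> = (\<Sum>a\<in>lin {1..?k} P. wt a) * Fk r (\<Sum>b\<in>lin {r + 1..r + ?l} P. wt (map (\<lambda>x. x - r) b)) * ?C"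
        by (rule sum_sep)
      also have "(\<Sum>a\<in>lin {1..?k} P. wt a) = bfact ?k * hk ?k (lrel ?k P)"
        using sum_left_lin[of ?k P] less.IH[OF kn good_lrel[OF g r]] by simp
      also have "(\<Sum>b\<in>lin {r + 1..r + ?l} P. wt (map (\<lambda>x. x - r) b)) = bfact ?l * hk ?l (rrel r ?l P)"
        using sum_shift_lin[of r ?l P] less.IH[OF ln good_rrel[OF g r]] by simp
      also have "bfact ?k * hk ?k (lrel ?k P) * Fk r (bfact ?l * hk ?l (rrel r ?l P)) * ?C =
          (hk ?k (lrel ?k P) * Fk r (hk ?l (rrel r ?l P))) * Fend (bfact (?k + ?l))"
        using bfact_nz[of ?k] Fk_nz[OF bfact_nz[of ?l], of r] by (simp add: Fk_mult field_simps)
      also have "hk ?k (lrel ?k P) * Fk r (hk ?l (rrel r ?l P)) = hk n P * vs (up P r)"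
        by (rule hk_split[OF g r, symmetric])
      also have "?k + ?l = n - 1" using rn by simp
      finally show ?thesis .
    qed
    have "(\<Sum>w\<in>lin {1..n} P. wt w) = (\<Sum>r\<in>roots n P. \<Sum>v\<in>lin ({1..n} - {r}) P. wt (r # v))"
      by (rule sum_lin_roots[OF g n1])
    also have "\<dots> = (\<Sum>r\<in>roots n P. hk n P * vs (up P r) * Fend (bfact (n - 1)))"
      by (rule sum.cong[OF refl]) (rule T)
    also have "\<dots> = hk n P * Fend (bfact (n - 1)) * (\<Sum>r\<in>roots n P. vs (up P r))"
      by (simp add: sum_distrib_left mult_ac)
    also have "\<dots> = hk n P * Fend (bfact (n - 1)) * brk n"
      by (simp only: sum_roots_vs[OF g])
    also have "\<dots> = bfact n * hk n P"
    proof -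
      have "bfact n = brk n * Fend (bfact (n - 1))" using n1 by (cases n) simp_all
      then show ?thesis by (simp add: mult_ac)
    qed
    finally show ?thesis .
  qed
qed


lemma po_facts:
  assumes "partial_order_on {1..n} P"
  shows "P \<subseteq> {1..n} \<times> {1..n}" "\<forall>i\<in>{1..n}. (i, i) \<in> P" "trans P" "antisym P"
  using assms unfolding partial_order_on_def preorder_on_def refl_on_def by auto

lemma cover_above:
  assumes box: "P \<subseteq> {1..n} \<times> {1..n}" and refl: "\<forall>i\<in>{1..n}. (i, i) \<in> P"
    and tr: "trans P" and an: "antisym P" and ij: "(i, j) \<in> P" "i \<noteq> j"
  shows "\<exists>c. covers P j c \<and> (i, c) \<in> P"
proof -
  let ?Z = "{z. (i, z) \<in> P \<and> (z, j) \<in> P \<and> z \<noteq> j}"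
  let ?d = "\<lambda>z. card {x. (x, z) \<in> P}"
  have iZ: "i \<in> ?Z" using ij refl box by auto
  have fin: "finite {x. (x, z) \<in> P}" for z
    by (rule finite_subset[of _ "{1..n}"]) (use box in blast, simp)
  have bound: "?d z < n + 1" for z
  proof -
    have "{x. (x, z) \<in> P} \<subseteq> {1..n}" using box by blast
    then have "?d z \<le> card {1..n}" by (rule card_mono[rotated]) simp
    then show ?thesis by simp
  qed
  have "\<exists>c. c \<in> ?Z \<and> (\<forall>z. z \<in> ?Z \<longrightarrow> ?d z \<le> ?d c)"
    by (rule ex_has_greatest_nat[of _ i _ "n + 1"]) (use iZ bound in auto)
  then obtain c where c: "c \<in> ?Z" and cmax: "\<forall>z. z \<in> ?Z \<longrightarrow> ?d z \<le> ?d c" by blast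
  have "covers P j c"
    unfolding covers_def
  proof (intro conjI)
    show "(c, j) \<in> P" "c \<noteq> j" using c by auto
    show "\<not> (\<exists>k. k \<noteq> c \<and> k \<noteq> j \<and> (c, k) \<in> P \<and> (k, j) \<in> P)"
    proof
    assume "\<exists>k. k \<noteq> c \<and> k \<noteq> j \<and> (c, k) \<in> P \<and> (k, j) \<in> P"
    then obtain k where k: "k \<noteq> c" "k \<noteq> j" "(c, k) \<in> P" "(k, j) \<in> P" by blast
    have ic: "(i, c) \<in> P" using c by simp
    have "(i, k) \<in> P" using transD[OF tr ic k(3)] .
    then have kZ: "k \<in> ?Z" using k by simp
    have sub: "{x. (x, c) \<in> P} \<subseteq> {x. (x, k) \<in> P}" using transD[OF tr _ k(3)] by blast
    have "k \<in> {1..n}" using box k(4) by blast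
    then have "k \<in> {x. (x, k) \<in> P}" using refl by simp
    moreover have "k \<notin> {x. (x, c) \<in> P}" using antisymD[OF an k(3)] k(1) by blast
    ultimately have "{x. (x, c) \<in> P} \<subset> {x. (x, k) \<in> P}" using sub by blast
    then have "?d c < ?d k" by (rule psubset_card_mono[OF fin])
    moreover have "?d k \<le> ?d c" using cmax kZ by blast
    ultimately show False by simp
    qed
  qed
  then show ?thesis using c by blast
qed

lemma forest_chain:
  assumes box: "P \<subseteq> {1..n} \<times> {1..n}" and refl: "\<forall>i\<in>{1..n}. (i, i) \<in> P"
    and tr: "trans P" and an: "antisym P"
    and cov: "\<forall>j\<in>{1..n}. \<forall>i1 i2. covers P j i1 \<and> covers P j i2 \<longrightarrow> i1 = i2"
  shows "(i1, j) \<in> P \<Longrightarrow> (i2, j) \<in> P \<Longrightarrow> (i1, i2) \<in> P \<or> (i2, i1) \<in> P"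
proof (induction "card {x. (x, j) \<in> P}" arbitrary: j i1 i2 rule: less_induct)
  case less
  show ?case
  proof (cases "i1 = j \<or> i2 = j")
    case True
    then show ?thesis using less.prems by auto
  next
    case False
    obtain c1 where c1: "covers P j c1" "(i1, c1) \<in> P"
      using cover_above[OF box refl tr an less.prems(1)] False by blast
    obtain c2 where c2: "covers P j c2" "(i2, c2) \<in> P"
      using cover_above[OF box refl tr an less.prems(2)] False by blast
    have jn: "j \<in> {1..n}" using box less.prems(1) by blast
    have "c1 = c2" using cov jn c1(1) c2(1) by blast
    have cj: "(c1, j) \<in> P" "c1 \<noteq> j" using c1(1) by (auto simp: covers_def)
    have fin: "finite {x. (x, j) \<in> P}"
      by (rule finite_subset[of _ "{1..n}"]) (use box in blast, simp)
    have sub: "{x. (x, c1) \<in> P} \<subseteq> {x. (x, j) \<in> P}" using transD[OF tr _ cj(1)] by blast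
    have "j \<in> {x. (x, j) \<in> P}" using refl jn by simp
    moreover have "j \<notin> {x. (x, c1) \<in> P}" using antisymD[OF an cj(1)] cj(2) by blast
    ultimately have "{x. (x, c1) \<in> P} \<subset> {x. (x, j) \<in> P}" using sub by blast
    then have "card {x. (x, c1) \<in> P} < card {x. (x, j) \<in> P}" by (rule psubset_card_mono[OF fin])
    then show ?thesis using less.hyps c1(2) c2(2) \<open>c1 = c2\<close> by blast
  qed
qed

lemma rlf_good: "rec_labelled_forest n P \<Longrightarrow> good n P"
proof -
  assume "rec_labelled_forest n P"
  then have po: "partial_order_on {1..n} P"
    and cov: "\<forall>j\<in>{1..n}. \<forall>i1 i2. covers P j i1 \<and> covers P j i2 \<longrightarrow> i1 = i2"
    and int: "\<forall>i\<in>{1..n}. \<exists>a b. {j. (i, j) \<in> P} = {a..b}"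
    unfolding rec_labelled_forest_def by blast+
  note pf = po_facts[OF po]
  have ch: "\<forall>j i1 i2. (i1, j) \<in> P \<longrightarrow> (i2, j) \<in> P \<longrightarrow> (i1, i2) \<in> P \<or> (i2, i1) \<in> P"
    using forest_chain[OF pf cov] by blast
  show "good n P" unfolding good_def up_def using pf int ch by blast
qed


definition sh :: "nat \<Rightarrow> (nat \<times> nat) set \<Rightarrow> (nat \<times> nat) set" where
  "sh s Q = {(i, j). s < i \<and> s < j \<and> (i - s, j - s) \<in> Q}"

lemma good_union:
  assumes gP: "good n P" and gQ: "good m Q"
  shows "good (n + m) (P \<union> sh n Q)"
proof -
  let ?R = "P \<union> sh n Q"
  have inP: "(i, j) \<in> P \<Longrightarrow> i \<in> {1..n} \<and> j \<in> {1..n}" for i j using goodD(1)[OF gP] by blast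
  have inS: "(i, j) \<in> sh n Q \<Longrightarrow> n < i \<and> n < j \<and> (i - n, j - n) \<in> Q" for i j by (simp add: sh_def)
  have inQ: "(i, j) \<in> Q \<Longrightarrow> i \<in> {1..m} \<and> j \<in> {1..m}" for i j using goodD(1)[OF gQ] by blast
  have 1: "?R \<subseteq> {1..n + m} \<times> {1..n + m}"
  proof
    fix x assume "x \<in> ?R"
    then obtain i j where x: "x = (i, j)" "(i, j) \<in> ?R" by (cases x) auto
    show "x \<in> {1..n + m} \<times> {1..n + m}"
    proof (cases "(i, j) \<in> P")
      case True
      then have "i \<in> {1..n} \<and> j \<in> {1..n}" by (rule inP)
      then show ?thesis using x by auto
    next
      case False
      then have "(i, j) \<in> sh n Q" using x by blast
      then have "n < i" "n < j" "(i - n, j - n) \<in> Q" using inS by blast+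
      then show ?thesis using inQ x by force
    qed
  qed
  have 2: "\<forall>i\<in>{1..n + m}. (i, i) \<in> ?R"
  proof
    fix i assume i: "i \<in> {1..n + m}"
    show "(i, i) \<in> ?R"
    proof (cases "i \<le> n")
      case True then show ?thesis using goodD(2)[OF gP] i by simp
    next
      case False
      then have "i - n \<in> {1..m}" using i by auto
      then have "(i - n, i - n) \<in> Q" using goodD(2)[OF gQ] by blast
      then show ?thesis using False by (simp add: sh_def)
    qed
  qed
  have side: "(i, j) \<in> ?R \<Longrightarrow> (i \<le> n \<and> j \<le> n \<and> (i, j) \<in> P) \<or> (n < i \<and> n < j \<and> (i - n, j - n) \<in> Q)" for i j
    using inP inS by fastforce
  have 3: "trans ?R"
  proof (rule transI)
    fix x y z assume xy: "(x, y) \<in> ?R" and yz: "(y, z) \<in> ?R"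
    show "(x, z) \<in> ?R"
    proof (cases "y \<le> n")
      case True
      then have "(x, y) \<in> P" "(y, z) \<in> P" using side[OF xy] side[OF yz] by auto
      then show ?thesis using goodD(3)[OF gP] by blast
    next
      case False
      then have a: "n < x" "(x - n, y - n) \<in> Q" "n < z" "(y - n, z - n) \<in> Q" using side[OF xy] side[OF yz] by auto
      then have "(x - n, z - n) \<in> Q" using goodD(3)[OF gQ] by blast
      then show ?thesis using a by (simp add: sh_def)
    qed
  qed
  have 4: "antisym ?R"
  proof (rule antisymI)
    fix x y assume xy: "(x, y) \<in> ?R" and yx: "(y, x) \<in> ?R"
    show "x = y"
    proof (cases "y \<le> n")
      case True
      then have "(x, y) \<in> P" "(y, x) \<in> P" using side[OF xy] side[OF yx] by auto
      then show ?thesis using goodD(4)[OF gP] by blast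
    next
      case False
      then have a: "n < x" "(x - n, y - n) \<in> Q" "(y - n, x - n) \<in> Q" using side[OF xy] side[OF yx] by auto
      then have "x - n = y - n" using goodD(4)[OF gQ] by blast
      then show ?thesis using a False by simp
    qed
  qed
  have upL: "up ?R i = up P i" if "i \<le> n" for i
    using that by (auto simp: up_def sh_def)
  have upR: "up ?R (i + n) = (\<lambda>x. x + n) ` up Q i" if i1: "1 \<le> i" for i
  proof
    show "up ?R (i + n) \<subseteq> (\<lambda>x. x + n) ` up Q i"
    proof
      fix j assume "j \<in> up ?R (i + n)"
      then have "(i + n, j) \<in> ?R" by (simp add: up_def)
      then have "(i + n \<le> n \<and> j \<le> n \<and> (i + n, j) \<in> P) \<or> (n < i + n \<and> n < j \<and> (i + n - n, j - n) \<in> Q)"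
        by (rule side)
      then have "n < j" "(i, j - n) \<in> Q" using i1 by auto
      then show "j \<in> (\<lambda>x. x + n) ` up Q i" by (auto simp: up_def image_iff intro!: bexI[of _ "j - n"])
    qed
    show "(\<lambda>x. x + n) ` up Q i \<subseteq> up ?R (i + n)"
    proof
      fix j assume "j \<in> (\<lambda>x. x + n) ` up Q i"
      then obtain j' where "j = j' + n" "(i, j') \<in> Q" by (auto simp: up_def)
      moreover have "1 \<le> i" "1 \<le> j'" using inQ \<open>(i, j') \<in> Q\<close> by auto
      ultimately show "j \<in> up ?R (i + n)" by (simp add: up_def sh_def)
    qed
  qed
  have 5: "\<forall>i\<in>{1..n + m}. \<exists>a b. up ?R i = {a..b}"
  proof
    fix i assume i: "i \<in> {1..n + m}"
    show "\<exists>a b. up ?R i = {a..b}"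
    proof (cases "i \<le> n")
      case True
      then show ?thesis using upL goodD(5)[OF gP] i by simp
    next
      case False
      then have i': "i - n \<in> {1..m}" "i = i - n + n" using i by auto
      obtain a b where "up Q (i - n) = {a..b}" using goodD(5)[OF gQ i'(1)] by blast
      then have "up ?R i = {a + n..b + n}" using upR[of "i - n"] i' by (simp add: image_shift_atLeastAtMost)
      then show ?thesis by blast
    qed
  qed
  have 6: "\<forall>j i1 i2. (i1, j) \<in> ?R \<longrightarrow> (i2, j) \<in> ?R \<longrightarrow> (i1, i2) \<in> ?R \<or> (i2, i1) \<in> ?R"
  proof (intro allI impI)
    fix j i1 i2 assume a: "(i1, j) \<in> ?R" "(i2, j) \<in> ?R"
    show "(i1, i2) \<in> ?R \<or> (i2, i1) \<in> ?R"
    proof (cases "j \<le> n")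
      case True
      then have "(i1, j) \<in> P" "(i2, j) \<in> P" using side[OF a(1)] side[OF a(2)] by auto
      then show ?thesis using goodD(6)[OF gP] by blast
    next
      case False
      then have b: "n < i1" "n < i2" "(i1 - n, j - n) \<in> Q" "(i2 - n, j - n) \<in> Q"
        using side[OF a(1)] side[OF a(2)] by auto
      then have "(i1 - n, i2 - n) \<in> Q \<or> (i2 - n, i1 - n) \<in> Q" using goodD(6)[OF gQ] by blast
      then show ?thesis using b by (auto simp: sh_def)
    qed
  qed
  show ?thesis unfolding good_def using 1 2 3 4 5 6 by blast
qed

lemma up_union_left: "i \<le> n \<Longrightarrow> up (P \<union> sh n Q) i = up P i"
  by (auto simp: up_def sh_def)

lemma up_union_right:
  assumes gP: "good n P" and gQ: "good m Q" and i1: "1 \<le> i"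
  shows "up (P \<union> sh n Q) (i + n) = (\<lambda>x. x + n) ` up Q i"
proof
  have inP: "(a, b) \<in> P \<Longrightarrow> a \<le> n" for a b using goodD(1)[OF gP] by auto
  show "up (P \<union> sh n Q) (i + n) \<subseteq> (\<lambda>x. x + n) ` up Q i"
  proof
    fix j assume "j \<in> up (P \<union> sh n Q) (i + n)"
    then have "(i + n, j) \<in> P \<union> sh n Q" by (simp add: up_def)
    moreover have "(i + n, j) \<notin> P" using inP i1 by fastforce
    ultimately have "(i + n, j) \<in> sh n Q" by blast
    then have "n < j" "(i, j - n) \<in> Q" by (auto simp: sh_def)
    then show "j \<in> (\<lambda>x. x + n) ` up Q i" by (auto simp: up_def image_iff intro!: bexI[of _ "j - n"])
  qed
  show "(\<lambda>x. x + n) ` up Q i \<subseteq> up (P \<union> sh n Q) (i + n)"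
  proof
    fix j assume "j \<in> (\<lambda>x. x + n) ` up Q i"
    then obtain j' where j': "j = j' + n" "(i, j') \<in> Q" by (auto simp: up_def)
    moreover have "1 \<le> j'" using goodD(1)[OF gQ j'(2)] by auto
    ultimately show "j \<in> up (P \<union> sh n Q) (i + n)" using i1 by (simp add: up_def sh_def)
  qed
qed

lemma hk_union:
  assumes gP: "good n P" and gQ: "good m Q"
  shows "hk (n + m) (P \<union> sh n Q) = hk n P * Fk n (hk m Q)"
proof -
  let ?R = "P \<union> sh n Q"
  let ?f = "\<lambda>i. inverse (vs (up ?R i))"
  have split: "{1..n + m} = {1..n} \<union> {n + 1..n + m}" by auto
  have A: "(\<Prod>i\<in>{1..n}. ?f i) = hk n P"
    unfolding hk_def by (intro prod.cong refl) (simp add: up_union_left)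
  have B: "Fk n (hk m Q) = (\<Prod>i\<in>{n + 1..n + m}. ?f i)"
  proof -
    have "Fk n (hk m Q) = (\<Prod>i\<in>{1..m}. inverse (Fk n (vs (up Q i))))"
      by (simp add: hk_def Fk_prod Fk_inverse)
    also have "\<dots> = (\<Prod>i\<in>{1..m}. ?f (i + n))"
    proof (intro prod.cong refl)
      fix i assume i: "i \<in> {1..m}"
      have z: "0 \<notin> up Q i" using up_sub[OF gQ] by fastforce
      show "inverse (Fk n (vs (up Q i))) = ?f (i + n)"
        using up_union_right[OF gP gQ, of i] i by (simp add: Fk_vs[OF z])
    qed
    also have "\<dots> = (\<Prod>i\<in>(\<lambda>i. i + n) ` {1..m}. ?f i)"
      by (rule prod.reindex[symmetric, unfolded comp_def]) (simp add: inj_on_def)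
    also have "(\<lambda>i. i + n) ` {1..m} = {n + 1..n + m}"
      by (simp add: image_shift_atLeastAtMost add.commute)
    finally show ?thesis .
  qed
  have "hk (n + m) ?R = (\<Prod>i\<in>{1..n}. ?f i) * (\<Prod>i\<in>{n + 1..n + m}. ?f i)"
    unfolding hk_def[of "n + m"] split by (rule prod.union_disjoint) auto
  then show ?thesis by (simp only: A B)
qed

lemma W_union:
  assumes gP: "good n P" and gQ: "good m Q"
  shows "(\<Sum>w\<in>lin {1..n + m} (P \<union> sh n Q). wt w) =
    (\<Sum>a\<in>lin {1..n} P. \<Sum>b\<in>lin {1..m} Q. \<Sum>v\<in>shuffles a (map (\<lambda>x. x + n) b). wt v)"
proof -
  let ?R = "P \<union> sh n Q"
  have inP: "(a, b) \<in> P \<Longrightarrow> a \<in> {1..n} \<and> b \<in> {1..n}" for a b using goodD(1)[OF gP] by blast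
  have split: "{1..n + m} = {1..n} \<union> {n + 1..n + m}" by auto
  have disj: "{1..n} \<inter> {n + 1..n + m} = {}" by auto
  have nc: "\<forall>x\<in>{1..n}. \<forall>y\<in>{n + 1..n + m}. (x, y) \<notin> ?R \<and> (y, x) \<notin> ?R"
  proof (intro ballI conjI notI)
    fix x y assume x: "x \<in> {1..n}" and y: "y \<in> {n + 1..n + m}"
    show False if "(x, y) \<in> ?R"
    proof (cases "(x, y) \<in> P")
      case True then show False using inP[OF True] y by simp
    next
      case False then have "(x, y) \<in> sh n Q" using that by blast
      then show False using x by (simp add: sh_def)
    qed
    show False if "(y, x) \<in> ?R"
    proof (cases "(y, x) \<in> P")
      case True then show False using inP[OF True] y by simp
    next
      case False then have "(y, x) \<in> sh n Q" using that by blast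
      then show False using x by (simp add: sh_def)
    qed
  qed
  have L1: "lin {1..n} ?R = lin {1..n} P"
  proof -
    have "?R \<inter> {1..n} \<times> {1..n} = P \<inter> {1..n} \<times> {1..n}" by (auto simp: sh_def)
    then show ?thesis using lin_restrict[of "{1..n}" ?R] lin_restrict[of "{1..n}" P] by simp
  qed
  have L2: "lin {n + 1..n + m} ?R = map (\<lambda>x. x + n) ` lin {1..m} Q"
  proof -
    have img: "(\<lambda>x. x + n) ` {1..m} = {n + 1..n + m}" by (simp add: image_shift_atLeastAtMost add.commute)
    have "lin ((\<lambda>x. x + n) ` {1..m}) ?R = map (\<lambda>x. x + n) ` lin {1..m} {(i, j). (i + n, j + n) \<in> ?R}"
      by (rule lin_shift)
    then have e: "lin {n + 1..n + m} ?R = map (\<lambda>x. x + n) ` lin {1..m} {(i, j). (i + n, j + n) \<in> ?R}"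
      by (simp only: img)
    have noP: "x = 0" if "(x + n, y) \<in> P" for x y using inP[OF that] by simp
    have "{(i, j). (i + n, j + n) \<in> ?R} \<inter> {1..m} \<times> {1..m} = Q \<inter> {1..m} \<times> {1..m}"
      by (auto simp: sh_def dest: noP)
    then have "lin {1..m} {(i, j). (i + n, j + n) \<in> ?R} = lin {1..m} Q"
      using lin_restrict[of "{1..m}" "{(i, j). (i + n, j + n) \<in> ?R}"] lin_restrict[of "{1..m}" Q] by simp
    then show ?thesis using e by simp
  qed
  have inj: "inj_on (map (\<lambda>x. x + n)) (lin {1..m} Q)"
  proof -
    have "inj (\<lambda>x::nat. x + n)" by (simp add: inj_on_def)
    then show ?thesis by (intro inj_onI) (simp add: inj_map_eq_map)
  qed
  have "(\<Sum>w\<in>lin {1..n + m} ?R. wt w) =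
      (\<Sum>a\<in>lin {1..n} ?R. \<Sum>b\<in>lin {n + 1..n + m} ?R. \<Sum>v\<in>shuffles a b. wt v)"
    unfolding split by (rule sum_lin_union) (use disj nc in auto)
  also have "\<dots> = (\<Sum>a\<in>lin {1..n} P. \<Sum>b\<in>map (\<lambda>x. x + n) ` lin {1..m} Q. \<Sum>v\<in>shuffles a b. wt v)"
    by (simp only: L1 L2)
  also have "\<dots> = (\<Sum>a\<in>lin {1..n} P. \<Sum>b\<in>lin {1..m} Q. \<Sum>v\<in>shuffles a (map (\<lambda>x. x + n) b). wt v)"
  proof (rule sum.cong[OF refl])
    fix a
    from sum.reindex[OF inj, where g = "\<lambda>b. \<Sum>v\<in>shuffles a b. wt v"]
    show "(\<Sum>b\<in>map (\<lambda>x. x + n) ` lin {1..m} Q. \<Sum>v\<in>shuffles a b. wt v) =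
        (\<Sum>b\<in>lin {1..m} Q. \<Sum>v\<in>shuffles a (map (\<lambda>x. x + n) b). wt v)"
      by (simp only: comp_def)
  qed
  finally show ?thesis .
qed


definition smul :: "ratfun \<Rightarrow> skew \<Rightarrow> skew" where
  "smul x A = Poly_Mapping.map ((*) x) A"

lemma lookup_pmap: "g 0 = 0 \<Longrightarrow> Poly_Mapping.lookup (Poly_Mapping.map g p) k = g (Poly_Mapping.lookup p k)"
  by transfer (simp add: when_def)

lemma lookup_smul: "Poly_Mapping.lookup (smul x A) k = x * Poly_Mapping.lookup A k"
  by (simp add: smul_def lookup_pmap)

lemma lookup_fq_scale: "Poly_Mapping.lookup (fq_scale c f) k = c * Poly_Mapping.lookup f k"
  by (simp add: fq_scale_def lookup_pmap)

lemma keys_fq_scale: "Poly_Mapping.keys (fq_scale c f) \<subseteq> Poly_Mapping.keys f"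
  by (auto simp: in_keys_iff lookup_fq_scale)

lemma smul_add: "smul x (A + B) = smul x A + smul x B"
  by (rule poly_mapping_eqI) (simp add: lookup_smul lookup_add algebra_simps)
lemma smul_zero: "smul x 0 = 0"
  by (rule poly_mapping_eqI) (simp add: lookup_smul)
lemma smul_single: "smul x (Poly_Mapping.single k v) = Poly_Mapping.single k (x * v)"
  by (rule poly_mapping_eqI) (simp add: lookup_smul lookup_single when_def)
lemma smul_sum: "smul x (sum f I) = (\<Sum>i\<in>I. smul x (f i))"
  by (induction I rule: infinite_finite_induct) (simp_all add: smul_zero smul_add)

lemma fq_scale_add: "fq_scale c (A + B) = fq_scale c A + fq_scale c B"
  by (rule poly_mapping_eqI) (simp add: lookup_fq_scale lookup_add algebra_simps)
lemma fq_scale_zero: "fq_scale c 0 = 0"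
  by (rule poly_mapping_eqI) (simp add: lookup_fq_scale)
lemma fq_scale_single: "fq_scale c (Poly_Mapping.single k v) = Poly_Mapping.single k (c * v)"
  by (rule poly_mapping_eqI) (simp add: lookup_fq_scale lookup_single when_def)
lemma fq_scale_sum: "fq_scale c (sum f I) = (\<Sum>i\<in>I. fq_scale c (f i))"
  by (induction I rule: infinite_finite_induct) (simp_all add: fq_scale_zero fq_scale_add)

abbreviation cw :: "nat list \<Rightarrow> ratfun" where "cw w \<equiv> wt w / bfact (length w)"

lemma phi_gen:
  assumes "finite A" "Poly_Mapping.keys f \<subseteq> A"
  shows "phi_inv f = (\<Sum>w\<in>A. Poly_Mapping.single (length w) (rconst (Poly_Mapping.lookup f w) * cw w))"
  unfolding phi_inv_def
  by (rule sum.mono_neutral_left) (use assms in \<open>auto simp: in_keys_iff rconst_zero\<close>)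

lemma phi_zero: "phi_inv 0 = 0"
  by (simp add: phi_inv_def)

lemma phi_add: "phi_inv (f + g) = phi_inv f + phi_inv g"
proof -
  let ?A = "Poly_Mapping.keys f \<union> Poly_Mapping.keys g"
  have "Poly_Mapping.keys (f + g) \<subseteq> ?A" by (rule keys_add)
  then show ?thesis
    by (simp add: phi_gen[of ?A] lookup_add rconst_add distrib_right add_divide_distrib single_add sum.distrib)
qed

lemma phi_sum: "phi_inv (sum f I) = (\<Sum>i\<in>I. phi_inv (f i))"
  by (induction I rule: infinite_finite_induct) (simp_all add: phi_zero phi_add)

lemma phi_single: "phi_inv (Poly_Mapping.single w q) = Poly_Mapping.single (length w) (rconst q * cw w)"
  by (simp add: phi_gen[of "{w}"])

lemma phi_scale: "phi_inv (fq_scale c f) = smul (rconst c) (phi_inv f)"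
proof -
  have k: "Poly_Mapping.keys (fq_scale c f) \<subseteq> Poly_Mapping.keys f" by (rule keys_fq_scale)
  show ?thesis
    by (simp add: phi_gen[OF _ k] phi_gen[of "Poly_Mapping.keys f" f] lookup_fq_scale rconst_mult
        smul_sum smul_single mult.assoc)
qed

lemma fq_mult_gen:
  assumes "finite A" "Poly_Mapping.keys f \<subseteq> A" "finite B" "Poly_Mapping.keys g \<subseteq> B"
  shows "fq_mult f g = (\<Sum>a\<in>A. \<Sum>b\<in>B. \<Sum>w\<in>shuffles a (map (\<lambda>x. x + length a) b).
     Poly_Mapping.single w (Poly_Mapping.lookup f a * Poly_Mapping.lookup g b))"
proof -
  have "fq_mult f g = (\<Sum>a\<in>A. \<Sum>b\<in>Poly_Mapping.keys g. \<Sum>w\<in>shuffles a (map (\<lambda>x. x + length a) b).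
     Poly_Mapping.single w (Poly_Mapping.lookup f a * Poly_Mapping.lookup g b))"
    unfolding fq_mult_def
    by (rule sum.mono_neutral_left) (use assms in \<open>auto simp: in_keys_iff\<close>)
  also have "\<dots> = (\<Sum>a\<in>A. \<Sum>b\<in>B. \<Sum>w\<in>shuffles a (map (\<lambda>x. x + length a) b).
     Poly_Mapping.single w (Poly_Mapping.lookup f a * Poly_Mapping.lookup g b))"
    by (intro sum.cong refl sum.mono_neutral_left) (use assms in \<open>auto simp: in_keys_iff\<close>)
  finally show ?thesis .
qed

lemma fq_mult_zero_left: "fq_mult 0 g = 0" by (simp add: fq_mult_def)
lemma fq_mult_zero_right: "fq_mult f 0 = 0" by (simp add: fq_mult_def)

lemma fq_mult_add_left: "fq_mult (f1 + f2) g = fq_mult f1 g + fq_mult f2 g"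
proof -
  let ?A = "Poly_Mapping.keys f1 \<union> Poly_Mapping.keys f2" and ?B = "Poly_Mapping.keys g"
  have "Poly_Mapping.keys (f1 + f2) \<subseteq> ?A" by (rule keys_add)
  then show ?thesis
    by (simp add: fq_mult_gen[of ?A _ ?B] lookup_add distrib_right single_add sum.distrib)
qed

lemma fq_mult_add_right: "fq_mult f (g1 + g2) = fq_mult f g1 + fq_mult f g2"
proof -
  let ?A = "Poly_Mapping.keys f" and ?B = "Poly_Mapping.keys g1 \<union> Poly_Mapping.keys g2"
  have "Poly_Mapping.keys (g1 + g2) \<subseteq> ?B" by (rule keys_add)
  then show ?thesis
    by (simp add: fq_mult_gen[of ?A _ ?B] lookup_add distrib_left single_add sum.distrib)
qed

lemma fq_mult_scale_left: "fq_mult (fq_scale c f) g = fq_scale c (fq_mult f g)"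
proof -
  have k: "Poly_Mapping.keys (fq_scale c f) \<subseteq> Poly_Mapping.keys f" by (rule keys_fq_scale)
  show ?thesis
    by (simp add: fq_mult_gen[OF _ k, of "Poly_Mapping.keys g"] fq_mult_gen[of "Poly_Mapping.keys f" f "Poly_Mapping.keys g"]
        lookup_fq_scale fq_scale_sum fq_scale_single mult.assoc)
qed

lemma fq_mult_scale_right: "fq_mult f (fq_scale c g) = fq_scale c (fq_mult f g)"
proof -
  have k: "Poly_Mapping.keys (fq_scale c g) \<subseteq> Poly_Mapping.keys g" by (rule keys_fq_scale)
  show ?thesis
    by (simp add: fq_mult_gen[OF _ _ _ k, of "Poly_Mapping.keys f"] fq_mult_gen[of "Poly_Mapping.keys f" f "Poly_Mapping.keys g"]
        lookup_fq_scale fq_scale_sum fq_scale_single mult_ac)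
qed

lemma skew_gen:
  assumes "finite A" "Poly_Mapping.keys X \<subseteq> A" "finite B" "Poly_Mapping.keys Y \<subseteq> B"
  shows "skew_mult X Y = (\<Sum>k\<in>A. \<Sum>l\<in>B.
      Poly_Mapping.single (k + l) (Poly_Mapping.lookup X k * Fk k (Poly_Mapping.lookup Y l)))"
proof -
  have "skew_mult X Y = (\<Sum>k\<in>A. \<Sum>l\<in>Poly_Mapping.keys Y.
      Poly_Mapping.single (k + l) (Poly_Mapping.lookup X k * Fk k (Poly_Mapping.lookup Y l)))"
    unfolding skew_mult_def
    by (rule sum.mono_neutral_left) (use assms in \<open>auto simp: in_keys_iff\<close>)
  also have "\<dots> = (\<Sum>k\<in>A. \<Sum>l\<in>B.
      Poly_Mapping.single (k + l) (Poly_Mapping.lookup X k * Fk k (Poly_Mapping.lookup Y l)))"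
    by (intro sum.cong refl sum.mono_neutral_left) (use assms in \<open>auto simp: in_keys_iff Fk_zero\<close>)
  finally show ?thesis .
qed

lemma skew_zero_left: "skew_mult 0 B = 0" by (simp add: skew_mult_def)
lemma skew_zero_right: "skew_mult A 0 = 0" by (simp add: skew_mult_def)

lemma skew_add_left: "skew_mult (A1 + A2) B = skew_mult A1 B + skew_mult A2 B"
proof -
  let ?A = "Poly_Mapping.keys A1 \<union> Poly_Mapping.keys A2" and ?B = "Poly_Mapping.keys B"
  have "Poly_Mapping.keys (A1 + A2) \<subseteq> ?A" by (rule keys_add)
  then show ?thesis
    by (simp add: skew_gen[of ?A _ ?B] lookup_add distrib_right single_add sum.distrib)
qed

lemma skew_add_right: "skew_mult A (B1 + B2) = skew_mult A B1 + skew_mult A B2"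
proof -
  let ?A = "Poly_Mapping.keys A" and ?B = "Poly_Mapping.keys B1 \<union> Poly_Mapping.keys B2"
  have "Poly_Mapping.keys (B1 + B2) \<subseteq> ?B" by (rule keys_add)
  then show ?thesis
    by (simp add: skew_gen[of ?A _ ?B] lookup_add Fk_add distrib_left single_add sum.distrib)
qed

lemma keys_smul: "Poly_Mapping.keys (smul x A) \<subseteq> Poly_Mapping.keys A"
  by (auto simp: in_keys_iff lookup_smul)

lemma skew_smul_left: "skew_mult (smul x A) B = smul x (skew_mult A B)"
proof -
  have k: "Poly_Mapping.keys (smul x A) \<subseteq> Poly_Mapping.keys A" by (rule keys_smul)
  show ?thesis
    by (simp add: skew_gen[OF _ k, of "Poly_Mapping.keys B"] skew_gen[of "Poly_Mapping.keys A" A "Poly_Mapping.keys B"]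
        lookup_smul smul_sum smul_single mult.assoc)
qed

lemma skew_smul_right: "skew_mult A (smul (rconst c) B) = smul (rconst c) (skew_mult A B)"
proof -
  have k: "Poly_Mapping.keys (smul (rconst c) B) \<subseteq> Poly_Mapping.keys B" by (rule keys_smul)
  show ?thesis
    by (simp add: skew_gen[OF _ _ _ k, of "Poly_Mapping.keys A"] skew_gen[of "Poly_Mapping.keys A" A "Poly_Mapping.keys B"]
        lookup_smul smul_sum smul_single Fk_mult Fk_rconst mult_ac)
qed


lemma single_sum: "(\<Sum>i\<in>I. Poly_Mapping.single k (f i)) = Poly_Mapping.single k (\<Sum>i\<in>I. f i)"
  by (induction I rule: infinite_finite_induct) (simp_all add: single_add)

lemma finite_linext: "finite (linext n P)"
  by (simp add: linext_lin finite_lin)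

lemma lookup_fqF_poset: "Poly_Mapping.lookup (fqF_poset n P) w = (if w \<in> linext n P then 1 else 0)"
  using finite_linext[of n P]
  by (simp add: fqF_poset_def fqF_def lookup_sum lookup_single when_def)

lemma keys_fqF_poset: "Poly_Mapping.keys (fqF_poset n P) \<subseteq> linext n P"
  by (auto simp: in_keys_iff lookup_fqF_poset split: if_splits)

lemma length_linext: "w \<in> linext n P \<Longrightarrow> length w = n"
  by (auto simp: linext_lin lin_def dest: distinct_card[symmetric])

lemma phi_FP:
  assumes g: "good n P"
  shows "phi_inv (fqF_poset n P) = Poly_Mapping.single n (hk n P)"
proof -
  have "phi_inv (fqF_poset n P) = (\<Sum>w\<in>linext n P. Poly_Mapping.single n (wt w / bfact n))"
    by (simp add: phi_gen[OF finite_linext keys_fqF_poset] lookup_fqF_poset rconst_one length_linext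
        cong: sum.cong)
  also have "\<dots> = Poly_Mapping.single n ((\<Sum>w\<in>linext n P. wt w) / bfact n)"
    by (simp add: single_sum sum_divide_distrib)
  also have "(\<Sum>w\<in>linext n P. wt w) = bfact n * hk n P"
    using hook[OF g] by (simp add: linext_lin)
  finally show ?thesis using bfact_nz[of n] by simp
qed

lemma main_gen:
  assumes gP: "good n P" and gQ: "good m Q"
  shows "phi_inv (fq_mult (fqF_poset n P) (fqF_poset m Q)) =
    skew_mult (phi_inv (fqF_poset n P)) (phi_inv (fqF_poset m Q))"
proof -
  let ?L = "linext n P" and ?L' = "linext m Q"
  have "fq_mult (fqF_poset n P) (fqF_poset m Q) =
      (\<Sum>a\<in>?L. \<Sum>b\<in>?L'. \<Sum>w\<in>shuffles a (map (\<lambda>x. x + n) b). Poly_Mapping.single w 1)"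
    by (simp add: fq_mult_gen[OF finite_linext keys_fqF_poset finite_linext keys_fqF_poset]
        lookup_fqF_poset length_linext cong: sum.cong)
  then have "phi_inv (fq_mult (fqF_poset n P) (fqF_poset m Q)) =
      (\<Sum>a\<in>?L. \<Sum>b\<in>?L'. \<Sum>w\<in>shuffles a (map (\<lambda>x. x + n) b). Poly_Mapping.single (n + m) (wt w / bfact (n + m)))"
    by (simp add: phi_sum phi_single rconst_one length_shuffles length_linext cong: sum.cong)
  also have "\<dots> = Poly_Mapping.single (n + m)
      ((\<Sum>a\<in>?L. \<Sum>b\<in>?L'. \<Sum>w\<in>shuffles a (map (\<lambda>x. x + n) b). wt w) / bfact (n + m))"
    by (simp add: single_sum sum_divide_distrib)
  also have "(\<Sum>a\<in>?L. \<Sum>b\<in>?L'. \<Sum>w\<in>shuffles a (map (\<lambda>x. x + n) b). wt w) =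
      bfact (n + m) * (hk n P * Fk n (hk m Q))"
    using W_union[OF gP gQ] hook[OF good_union[OF gP gQ]] hk_union[OF gP gQ]
    by (simp add: linext_lin)
  also have "Poly_Mapping.single (n + m) (bfact (n + m) * (hk n P * Fk n (hk m Q)) / bfact (n + m)) =
      skew_mult (Poly_Mapping.single n (hk n P)) (Poly_Mapping.single m (hk m Q))"
    using bfact_nz[of "n + m"] by (simp add: skew_gen[of "{n}" _ "{m}"])
  finally show ?thesis by (simp add: phi_FP gP gQ)
qed

lemma main_PBT:
  assumes "f \<in> PBT" "g \<in> PBT"
  shows "phi_inv (fq_mult f g) = skew_mult (phi_inv f) (phi_inv g)"
  using assms
proof (induction f arbitrary: g rule: PBT.induct)
  case PBT_zero
  then show ?case by (simp add: fq_mult_zero_left phi_zero skew_zero_left)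
next
  case (PBT_gen n P)
  have gP: "good n P" by (rule rlf_good[OF PBT_gen.hyps])
  from PBT_gen.prems show ?case
  proof (induction g rule: PBT.induct)
    case PBT_zero
    then show ?case by (simp add: fq_mult_zero_right phi_zero skew_zero_right)
  next
    case (PBT_gen m Q)
    then show ?case using main_gen[OF gP rlf_good[OF PBT_gen.hyps]] by simp
  next
    case (PBT_add g1 g2)
    then show ?case by (simp add: fq_mult_add_right phi_add skew_add_right)
  next
    case (PBT_scale g c)
    then show ?case by (simp add: fq_mult_scale_right phi_scale skew_smul_right)
  qed
next
  case (PBT_add f1 f2)
  then show ?case by (simp add: fq_mult_add_left phi_add skew_add_left)
next
  case (PBT_scale f c)
  then show ?case by (simp add: fq_mult_scale_left phi_scale skew_smul_left)
qed

theorem proposition9p5: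
  shows "phi_inv fq_one = skew_one \<and>
         (\<forall>f\<in>PBT. \<forall>g\<in>PBT. phi_inv (fq_mult f g) = skew_mult (phi_inv f) (phi_inv g))"
proof
  show "phi_inv fq_one = skew_one"
    by (simp add: fq_one_def fqF_def phi_single rconst_one skew_one_def)
  show "\<forall>f\<in>PBT. \<forall>g\<in>PBT. phi_inv (fq_mult f g) = skew_mult (phi_inv f) (phi_inv g)"
    using main_PBT by blast
qed


end
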